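(* Let $\mathcal{H}=\mathcal{H}_S\otimes\mathcal{H}_B$ with $\dim\mathcal{H}_S=d_S<\infty$, $\dim\mathcal{H}_B=d_B<\infty$. Let $H_0$ and $V$ be Hermitian operators on $\mathcal{H}$ and $H=H_0+V$. Fix real numbers $E$ and $\Delta>0$. Let $G$ be the spectral projector of $H$ onto the eigenvalues of $H$ lying in $[E,E+\Delta]$ and $F$ the spectral projector of $H_0$ onto the eigenvalues of $H_0$ lying in $[E,E+\Delta]$, and assume $\operatorname{rank}G\ge 1$ and $\operatorname{rank}F\ge1$. Define $\omega_\sqcap=G/\operatorname{rank}G$, $\omega_\sqcap^{(0)}=F/\operatorname{rank}F$, and $\omega_\sqcap^S=\operatorname{Tr}_B\omega_\sqcap$, $\omega_\sqcap^{S(0)}=\operatorname{Tr}_B\omega_\sqcap^{(0)}$. Let $\Omega_{\max}=\max(\operatorname{rank}G,\operatorname{rank}F)$, $\Omega_{\min}=\min(\operatorname{rank}G,\operatorname{rank}F)$, $\Delta\Omega=\Omega_{\max}-\Omega_{\min}$. For $0<\varepsilon<\Delta/2$, let $\Omega_\varepsilon$ be the total number of eigenvalues (counted with multiplicity) of $H$ together with those of $H_0$ that lie in $[E,E+\varepsilon)\cup(E+\Delta-\varepsilon,E+\Delta]$. Then for every $0<\varepsilon<\Delta/2$, $$\tfrac12\|\omega_\sqcap^S-\omega_\sqcap^{S(0)}\|_1\le \tfrac12\|\omega_\sqcap-\omega_\sqcap^{(0)}\|_1\le \frac{\|V\|_\infty}{\varepsilon}+\frac{\Delta\Omega+\Om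ega_\varepsilon}{2\,\Omega_{\max}}.$$
   Context: $\|\cdot\|_1$ denotes the trace norm and $\|\cdot\|_\infty$ the operator norm; $\operatorname{Tr}_B$ is the partial trace over $\mathcal{H}_B$. The quantity $\tfrac12\|\rho-\sigma\|_1$ is the trace distance. *)

theory Defs
  imports "Jordan_Normal_Form.Schur_Decomposition" "Jordan_Normal_Form.DL_Rank"
    "HOL-Computational_Algebra.Fundamental_Theorem_Algebra"
begin

text \<open>The composite space H_S (x) H_B of dimension dS*dB uses the Kronecker ordering:
  the basis vector |i> (x) |a> (i < dS, a < dB) has index i*dB + a.\<close>

definition hermitian_mat :: "nat \<Rightarrow> complex mat \<Rightarrow> bool" where
  "hermitian_mat n A \<longleftrightarrow> A \<in> carrier_mat n n \<and> mat_adjoint A = A"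

definition unitary_mat :: "nat \<Rightarrow> complex mat \<Rightarrow> bool" where
  "unitary_mat n U \<longleftrightarrow> U \<in> carrier_mat n n \<and> mat_adjoint U * U = 1\<^sub>m n"

definition real_diag_mat :: "nat \<Rightarrow> (nat \<Rightarrow> real) \<Rightarrow> complex mat" where
  "real_diag_mat n d = mat n n (\<lambda>(i,j). if i = j then complex_of_real (d i) else 0)"

definition spectral_projector :: "nat \<Rightarrow> complex mat \<Rightarrow> real set \<Rightarrow> complex mat \<Rightarrow> bool" where
  "spectral_projector n A S P \<longleftrightarrow>
     (\<exists>U d. unitary_mat n U \<and> A = U * real_diag_mat n d * mat_adjoint U \<and>
            P = U * real_diag_mat n (\<lambda>i. if d i \<in> S then 1 else 0) * mat_adjoint U)"

definition eig_count :: "complex mat \<Rightarrow> real set \<Rightarrow> nat" where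
  "eig_count A S = size (filter_mset (\<lambda>z. Im z = 0 \<and> Re z \<in> S) (proots (char_poly A)))"

definition mat_rank :: "nat \<Rightarrow> complex mat \<Rightarrow> nat" where
  "mat_rank n A = vec_space.rank n A"

definition partial_trace_B :: "nat \<Rightarrow> nat \<Rightarrow> complex mat \<Rightarrow> complex mat" where
  "partial_trace_B dS dB M = mat dS dS (\<lambda>(i,j). \<Sum>a<dB. M $$ (i*dB + a, j*dB + a))"

text \<open>Trace norm: sum of the singular values, i.e. of the square roots of the eigenvalues
  (with multiplicity) of X^* X.\<close>
definition trace_norm :: "complex mat \<Rightarrow> real" where
  "trace_norm X = (\<Sum>z\<in># proots (char_poly (mat_adjoint X * X)). sqrt (Re z))"

definition vec_norm2 :: "complex vec \<Rightarrow> real" where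
  "vec_norm2 v = sqrt (\<Sum>i<dim_vec v. (cmod (v $ i))\<^sup>2)"

definition op_norm :: "complex mat \<Rightarrow> real" where
  "op_norm A = Sup {vec_norm2 (A *\<^sub>v v) | v. v \<in> carrier_vec (dim_col A) \<and> vec_norm2 v \<le> 1}"

end

theory Submission
  imports Defs
begin


declare index_mult_mat(1)[simp del]

lemma adj_dims[simp]: "dim_row (mat_adjoint A) = dim_col A" "dim_col (mat_adjoint A) = dim_row A"
  unfolding mat_adjoint_def by simp_all

lemma adj_index[simp]: "i < dim_col A \<Longrightarrow> j < dim_row A \<Longrightarrow> mat_adjoint A $$ (i,j) = cnj (A$$(j,i))"
  unfolding mat_adjoint_def by (simp add: mat_of_rows_index)

lemma adj_carrier[simp]: "A \<in> carrier_mat n m \<Longrightarrow> mat_adjoint A \<in> carrier_mat m n"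
  unfolding carrier_mat_def by simp

lemma mult_entry: "A \<in> carrier_mat n k \<Longrightarrow> B \<in> carrier_mat k m \<Longrightarrow> i<n \<Longrightarrow> j<m \<Longrightarrow>
   (A*B)$$(i,j) = (\<Sum>l<k. A$$(i,l) * B$$(l,j))"
  apply (subst index_mult_mat)
  apply auto[2]
  unfolding scalar_prod_def
  apply (rule sum.cong)
   apply (auto simp: lessThan_atLeast0)
  done

lemma mult_carrier_nn[simp]: "A \<in> carrier_mat n n \<Longrightarrow> B \<in> carrier_mat n n \<Longrightarrow> A * B \<in> carrier_mat n n"
  by (rule mult_carrier_mat)

lemma adj_adj[simp]: fixes A :: "complex mat" shows "mat_adjoint (mat_adjoint A) = A"
proof (rule eq_matI)
  fix i j assume "i < dim_row A" "j < dim_col A"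
  then show "mat_adjoint (mat_adjoint A) $$ (i, j) = A $$ (i, j)"
    by (subst adj_index) auto
qed auto

lemma adj_mult: fixes A B :: "complex mat" 
  assumes A: "A \<in> carrier_mat n k" and B: "B \<in> carrier_mat k m"
  shows "mat_adjoint (A*B) = mat_adjoint B * mat_adjoint A"
proof (rule eq_matI)
  fix i j assume ij: "i < dim_row (mat_adjoint B * mat_adjoint A)" "j < dim_col (mat_adjoint B * mat_adjoint A)"
  then have i: "i < m" and j: "j < n" using A B by auto
  have "mat_adjoint (A*B) $$ (i,j) = cnj ((A*B) $$ (j,i))" using A B i j by (subst adj_index) auto
  also have "\<dots> = (\<Sum>l<k. cnj (A$$(j,l)) * cnj (B$$(l,i)))"
    using A B i j by (simp add: mult_entry[OF A B])
  also have "\<dots> = (mat_adjoint B * mat_adjoint A) $$ (i,j)"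
    using A B i j by (subst mult_entry[of _ m k _ n]) (auto intro!: sum.cong)
  finally show "mat_adjoint (A*B) $$ (i,j) = (mat_adjoint B * mat_adjoint A) $$ (i,j)" .
qed (use A B in auto)

lemma real_diag_carrier[simp]: "real_diag_mat n d \<in> carrier_mat n n"
  unfolding real_diag_mat_def by simp

lemma real_diag_index[simp]: "i<n \<Longrightarrow> j<n \<Longrightarrow> real_diag_mat n d $$ (i,j) = (if i = j then complex_of_real (d i) else 0)"
  unfolding real_diag_mat_def by simp

lemma real_diag_dims[simp]: "dim_row (real_diag_mat n d) = n" "dim_col (real_diag_mat n d) = n"
  unfolding real_diag_mat_def by simp_all

lemma adj_real_diag[simp]: "mat_adjoint (real_diag_mat n d) = real_diag_mat n d"
proof (rule eq_matI)
  fix i j assume "i < dim_row (real_diag_mat n d)" "j < dim_col (real_diag_mat n d)"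
  then show "mat_adjoint (real_diag_mat n d) $$ (i,j) = real_diag_mat n d $$ (i,j)"
    by (subst adj_index) auto
qed auto

lemma mult_diag_right: "A \<in> carrier_mat m n \<Longrightarrow> i<m \<Longrightarrow> j<n \<Longrightarrow>
   (A * real_diag_mat n d) $$ (i,j) = A$$(i,j) * d j"
proof -
  assume a: "A \<in> carrier_mat m n" "i<m" "j<n"
  have "(A * real_diag_mat n d) $$ (i,j) = (\<Sum>l<n. A$$(i,l) * real_diag_mat n d $$(l,j))"
    using a by (simp add: mult_entry[of _ m n _ n])
  also have "\<dots> = (\<Sum>l<n. if l = j then A$$(i,j) * d j else 0)"
    using a by (intro sum.cong) auto
  also have "\<dots> = A$$(i,j) * d j" using a by simp
  finally show ?thesis .
qed

definition sdm :: "nat \<Rightarrow> complex mat \<Rightarrow> (nat \<Rightarrow> real) \<Rightarrow> complex mat" where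
  "sdm n U d = U * real_diag_mat n d * mat_adjoint U"

lemma sdm_dims[simp]: "dim_row (sdm n U d) = dim_row U" "dim_col (sdm n U d) = dim_row U"
  unfolding sdm_def by simp_all

lemma sdm_carrier[simp]: "U \<in> carrier_mat n n \<Longrightarrow> sdm n U d \<in> carrier_mat n n"
  unfolding sdm_def by (metis adj_carrier mult_carrier_mat real_diag_carrier)

lemma sdm_index: "U \<in> carrier_mat n n \<Longrightarrow> i<n \<Longrightarrow> j<n \<Longrightarrow>
   sdm n U d $$ (i,j) = (\<Sum>k<n. U$$(i,k) * d k * cnj (U$$(j,k)))"
  unfolding sdm_def
  apply (subst mult_entry[of _ n n _ n])
      apply (auto simp: mult_diag_right intro!: sum.cong)
  done


definition ip :: "nat \<Rightarrow> (nat \<Rightarrow> complex) \<Rightarrow> (nat \<Rightarrow> complex) \<Rightarrow> complex" where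
  "ip n x y = (\<Sum>i<n. cnj (x i) * y i)"
definition nsq :: "nat \<Rightarrow> (nat \<Rightarrow> complex) \<Rightarrow> real" where
  "nsq n x = (\<Sum>i<n. (cmod (x i))^2)"
definition mv :: "nat \<Rightarrow> complex mat \<Rightarrow> (nat \<Rightarrow> complex) \<Rightarrow> (nat \<Rightarrow> complex)" where
  "mv n A x = (\<lambda>i. \<Sum>j<n. A$$(i,j) * x j)"
definition cl :: "complex mat \<Rightarrow> nat \<Rightarrow> (nat \<Rightarrow> complex)" where
  "cl A k = (\<lambda>i. A$$(i,k))"
definition tr :: "nat \<Rightarrow> complex mat \<Rightarrow> complex" where
  "tr n A = (\<Sum>i<n. A$$(i,i))"

lemma cns: "complex_of_real ((cmod z)^2) = cnj z * z"
  by (metis complex_norm_square mult.commute)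

lemma nsq_ip: "complex_of_real (nsq n x) = ip n x x"
  unfolding nsq_def ip_def of_real_sum by (rule sum.cong[OF refl]) (rule cns)

lemma nsq_nonneg: "nsq n x \<ge> 0"
  unfolding nsq_def by (simp add: sum_nonneg)

lemma unitaryD: assumes "unitary_mat n U"
  shows "U \<in> carrier_mat n n" "mat_adjoint U * U = 1\<^sub>m n" "U * mat_adjoint U = 1\<^sub>m n"
proof -
  show U: "U \<in> carrier_mat n n" using assms unfolding unitary_mat_def by simp
  show 1: "mat_adjoint U * U = 1\<^sub>m n" using assms unfolding unitary_mat_def by simp
  show "U * mat_adjoint U = 1\<^sub>m n"
    by (rule mat_mult_left_right_inverse[OF adj_carrier[OF U] U 1])
qed

lemma unitary_cols: assumes "unitary_mat n U" "k<n" "l<n"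
  shows "ip n (cl U k) (cl U l) = (if k = l then 1 else 0)"
proof -
  have U: "U \<in> carrier_mat n n" using unitaryD[OF assms(1)] by simp
  have "(mat_adjoint U * U) $$ (k,l) = (\<Sum>i<n. cnj (U$$(i,k)) * U$$(i,l))"
    using U assms by (subst mult_entry[of _ n n _ n]) (auto intro!: sum.cong)
  then show ?thesis using unitaryD(2)[OF assms(1)] assms unfolding ip_def cl_def by simp
qed

lemma unitary_rows: assumes "unitary_mat n U" "i<n" "j<n"
  shows "(\<Sum>k<n. U$$(i,k) * cnj (U$$(j,k))) = (if i = j then 1 else 0)"
proof -
  have U: "U \<in> carrier_mat n n" using unitaryD[OF assms(1)] by simp
  have "(U * mat_adjoint U) $$ (i,j) = (\<Sum>k<n. U$$(i,k) * cnj (U$$(j,k)))"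
    using U assms by (subst mult_entry[of _ n n _ n]) (auto intro!: sum.cong)
  then show ?thesis using unitaryD(3)[OF assms(1)] assms by simp
qed

lemma sum_delta_left: "j < (n::nat) \<Longrightarrow> (\<Sum>i<n. (if i = j then (1::complex) else 0) * f i) = f j"
proof -
  assume j: "j < n"
  have "(\<Sum>i<n. (if i = j then (1::complex) else 0) * f i) = (\<Sum>i<n. if i = j then f i else 0)"
    by (intro sum.cong) auto
  also have "\<dots> = f j" using j by (subst sum.delta) auto
  finally show ?thesis .
qed

lemma sum_delta_right: "j < (n::nat) \<Longrightarrow> (\<Sum>i<n. f i * (if i = j then (1::complex) else 0)) = f j"
  using sum_delta_left[of j n f] by (simp add: mult.commute)

lemma sum_delta_left': "j < (n::nat) \<Longrightarrow> (\<Sum>i<n. (if j = i then (1::complex) else 0) * f i) = f j"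
proof -
  assume j: "j < n"
  have "(\<Sum>i<n. (if j = i then (1::complex) else 0) * f i) = (\<Sum>i<n. if i = j then f i else 0)"
    by (intro sum.cong) auto
  also have "\<dots> = f j" using j by (subst sum.delta) auto
  finally show ?thesis .
qed

lemma sum_swap3: "(\<Sum>k<(n::nat). \<Sum>i<m. \<Sum>j<l. f k i j) = (\<Sum>i<m. \<Sum>j<l. \<Sum>k<n. (f k i j :: 'a::comm_monoid_add))"
  by (subst sum.swap) (rule sum.cong[OF refl], rule sum.swap)

lemma parseval_c: assumes "unitary_mat n U"
  shows "(\<Sum>k<n. ip n (cl U k) x * cnj (ip n (cl U k) x)) = ip n x x"
proof -
  have 1: "ip n (cl U k) x * cnj (ip n (cl U k) x) = (\<Sum>i<n. \<Sum>j<n. x i * cnj (x j) * (U$$(j,k) * cnj (U$$(i,k))))" for k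
    unfolding ip_def cl_def cnj_sum sum_product by (intro sum.cong refl) (simp add: mult_ac)
  have "(\<Sum>k<n. ip n (cl U k) x * cnj (ip n (cl U k) x))
     = (\<Sum>i<n. \<Sum>j<n. \<Sum>k<n. x i * cnj (x j) * (U$$(j,k) * cnj (U$$(i,k))))"
    unfolding 1 by (rule sum_swap3)
  also have "\<dots> = (\<Sum>i<n. \<Sum>j<n. x i * cnj (x j) * (if j = i then 1 else 0))"
    by (intro sum.cong refl) (simp add: unitary_rows[OF assms] flip: sum_distrib_left)
  also have "\<dots> = (\<Sum>i<n. x i * cnj (x i))"
    by (intro sum.cong refl) (simp add: sum_delta_right[simplified eq_commute[of _ "Suc _"]] sum_delta_left')
  finally show ?thesis unfolding ip_def by (simp add: mult.commute)
qed

lemma parseval: assumes "unitary_mat n U"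
  shows "(\<Sum>k<n. (cmod (ip n (cl U k) x))^2) = nsq n x"
proof -
  have "complex_of_real (\<Sum>k<n. (cmod (ip n (cl U k) x))^2) = (\<Sum>k<n. ip n (cl U k) x * cnj (ip n (cl U k) x))"
    unfolding of_real_sum by (rule sum.cong[OF refl]) (simp only: cns mult.commute)
  also have "\<dots> = complex_of_real (nsq n x)" using parseval_c[OF assms] nsq_ip by simp
  finally show ?thesis using of_real_eq_iff by blast
qed

lemma mv_sdm: assumes "U \<in> carrier_mat n n" "i < n"
  shows "mv n (sdm n U d) x i = (\<Sum>k<n. U$$(i,k) * d k * ip n (cl U k) x)"
proof -
    note True = assms(2)
    have "mv n (sdm n U d) x i = (\<Sum>j<n. \<Sum>k<n. U$$(i,k) * d k * cnj (U$$(j,k)) * x j)"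
      unfolding mv_def using True assms by (simp add: sdm_index sum_distrib_right)
    also have "\<dots> = (\<Sum>k<n. U$$(i,k) * d k * ip n (cl U k) x)"
      unfolding ip_def cl_def by (subst sum.swap) (simp add: sum_distrib_left algebra_simps)
    finally show ?thesis .
qed


lemma cscalar_sum: "v \<in> carrier_vec n \<Longrightarrow> w \<in> carrier_vec n \<Longrightarrow> v \<bullet>c w = (\<Sum>i<n. v$i * cnj (w$i))"
  unfolding scalar_prod_def by (rule sum.cong) (auto simp: lessThan_atLeast0)

lemma unitary_completion:
  fixes v :: "complex vec"
  assumes v: "v \<in> carrier_vec n" and v0: "v \<noteq> 0\<^sub>v n"
  shows "\<exists>W c. unitary_mat n W \<and> (\<forall>i<n. W$$(i,0) = c * v$i)"
proof -
  interpret cof_vec_space n "TYPE(complex)" .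
  define b where "b = basis_completion v"
  define ws where "ws = gram_schmidt n b"
  have b: "set b \<subseteq> carrier_vec n" "distinct b" "\<not> lin_dep (set b)" "length b = n" "hd b = v"
    using basis_completion[OF v v0] unfolding b_def by auto
  have ws: "set ws \<subseteq> carrier_vec n" "corthogonal ws" "length ws = n"
    using gram_schmidt_result[OF b(1-3) ws_def] b(4) by auto
  have n0: "n \<noteq> 0" using v v0 by (metis carrier_vecD eq_vecI index_zero_vec(2) less_nat_zero_code)
  then obtain vs where bv: "b = v # vs" using b(4,5) by (cases b) auto
  have hdws: "hd ws = v" unfolding ws_def bv using gram_schmidt_hd[OF v] by simp
  have ws0: "ws ! 0 = v" using hdws n0 ws(3) by (cases ws) auto
  define N where "N j = sqrt (\<Sum>i<n. (cmod (ws!j $ i))^2)" for j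
  have wsc: "ws ! j \<in> carrier_vec n" if "j < n" for j using ws that by auto
  have self: "ws!j \<bullet>c ws!j = complex_of_real ((N j)^2)" if "j<n" for j
  proof -
    have "ws!j \<bullet>c ws!j = (\<Sum>i<n. ws!j$i * cnj (ws!j$i))" using cscalar_sum wsc that by blast
    also have "\<dots> = complex_of_real (\<Sum>i<n. (cmod (ws!j $ i))^2)"
      unfolding of_real_sum by (rule sum.cong[OF refl]) (simp only: cns mult.commute)
    finally show ?thesis unfolding N_def by (simp add: sum_nonneg)
  qed
  have Npos: "N j > 0" if "j<n" for j
  proof -
    have "ws!j \<bullet>c ws!j \<noteq> 0" using ws(2) ws(3) that unfolding corthogonal_def by auto
    then have "N j \<noteq> 0" using self[OF that] by auto
    moreover have "N j \<ge> 0" unfolding N_def by (simp add: sum_nonneg)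
    ultimately show ?thesis by simp
  qed
  define W where "W = mat n n (\<lambda>(i,j). ws!j $ i / N j)"
  have Wc: "W \<in> carrier_mat n n" unfolding W_def by simp
  have "mat_adjoint W * W = 1\<^sub>m n"
  proof (rule eq_matI)
    fix k l assume kl: "k < dim_row (1\<^sub>m n)" "l < dim_col (1\<^sub>m n)"
    then have k: "k < n" and l: "l < n" by auto
    have "(mat_adjoint W * W) $$ (k,l) = (\<Sum>i<n. cnj (ws!k $ i / N k) * (ws!l $ i / N l))"
      using k l Wc by (subst mult_entry[of _ n n _ n]) (auto simp: W_def intro!: sum.cong)
    also have "\<dots> = (\<Sum>i<n. ws!l $ i * cnj (ws!k $ i)) / (N k * N l)"
      by (simp add: sum_divide_distrib mult_ac)
    also have "\<dots> = (ws!l \<bullet>c ws!k) / (N k * N l)"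
      using cscalar_sum[OF wsc[OF l] wsc[OF k]] by simp
    also have "\<dots> = 1\<^sub>m n $$ (k,l)"
    proof (cases "k = l")
      case True
      then show ?thesis using self[OF k] Npos[OF k] k by (simp add: power2_eq_square)
    next
      case False
      then have "ws!l \<bullet>c ws!k = 0" using ws(2,3) k l unfolding corthogonal_def by auto
      then show ?thesis using False k l by simp
    qed
    finally show "(mat_adjoint W * W) $$ (k,l) = 1\<^sub>m n $$ (k,l)" .
  qed (use Wc in auto)
  then have "unitary_mat n W" unfolding unitary_mat_def using Wc by simp
  moreover have "\<forall>i<n. W$$(i,0) = (1 / N 0) * v$i"
    using n0 ws0 unfolding W_def by auto
  ultimately show ?thesis by blast
qed


lemma unitary_mult: assumes "unitary_mat n A" "unitary_mat n B" shows "unitary_mat n (A * B)"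
proof -
  have A: "A \<in> carrier_mat n n" and B: "B \<in> carrier_mat n n" using assms unitaryD by auto
  have "mat_adjoint (A*B) * (A*B) = mat_adjoint B * (mat_adjoint A * (A * B))"
    using A B by (simp add: adj_mult[OF A B] assoc_mult_mat[of _ n n _ n _ n])
  also have "mat_adjoint A * (A * B) = (mat_adjoint A * A) * B"
    using A B by (simp add: assoc_mult_mat[of _ n n _ n _ n])
  also have "\<dots> = B" using unitaryD[OF assms(1)] B by simp
  also have "mat_adjoint B * B = 1\<^sub>m n" using unitaryD[OF assms(2)] by simp
  finally show ?thesis unfolding unitary_mat_def using A B by simp
qed

lemma hermitianD: "hermitian_mat n A \<Longrightarrow> i<n \<Longrightarrow> j<n \<Longrightarrow> A$$(i,j) = cnj (A$$(j,i))"
  unfolding hermitian_mat_def by (metis adj_index carrier_matD(1,2))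

lemma spectral: "hermitian_mat n A \<Longrightarrow> \<exists>U d. unitary_mat n U \<and> A = sdm n U d"
proof (induction n arbitrary: A)
  case 0
  have "unitary_mat 0 (1\<^sub>m 0)" unfolding unitary_mat_def by (auto intro!: eq_matI)
  moreover have "A = sdm 0 (1\<^sub>m 0) (\<lambda>_. 0)" using 0 unfolding hermitian_mat_def
    by (auto intro!: eq_matI simp: sdm_def)
  ultimately show ?case by blast
next
  case (Suc m)
  define n where "n = Suc m"
  have A: "A \<in> carrier_mat n n" using Suc.prems unfolding hermitian_mat_def n_def by simp
  have herm: "hermitian_mat n A" using Suc.prems n_def by simp
  have "degree (char_poly A) = n" using degree_monic_char_poly[OF A] by simp
  then have "\<not> constant (poly (char_poly A))" unfolding constant_degree n_def by simp
  then obtain e where "poly (char_poly A) e = 0" using fundamental_theorem_of_algebra by blast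
  then have "eigenvalue A e" using eigenvalue_root_char_poly[OF A] by simp
  then have "eigenvector A (find_eigenvector A e) e" using find_eigenvector[OF A] by simp
  then obtain v where v: "v \<in> carrier_vec n" "v \<noteq> 0\<^sub>v n" "A *\<^sub>v v = e \<cdot>\<^sub>v v"
    unfolding eigenvector_def using A by auto
  obtain W c where W: "unitary_mat n W" and Wv: "\<forall>i<n. W$$(i,0) = c * v$i"
    using unitary_completion[OF v(1,2)] by blast
  have Wc: "W \<in> carrier_mat n n" using unitaryD[OF W] by simp
  define A' where "A' = mat_adjoint W * A * W"
  have A'c: "A' \<in> carrier_mat n n" unfolding A'_def using A Wc by (metis adj_carrier mult_carrier_mat)
  have n0: "0 < n" unfolding n_def by simp
  have AW0: "(A * W) $$ (k,0) = e * W$$(k,0)" if k: "k < n" for k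
  proof -
    have "(A * W) $$ (k,0) = (\<Sum>l<n. A$$(k,l) * (c * v$l))"
      using A Wc k n0 Wv by (subst mult_entry[of _ n n _ n]) auto
    also have "\<dots> = c * (A *\<^sub>v v) $ k"
      using A k v(1) by (simp add: index_mult_mat_vec scalar_prod_def sum_distrib_left lessThan_atLeast0 mult_ac)
    also have "\<dots> = e * W$$(k,0)" using v(3) v(1) k Wv by simp
    finally show ?thesis .
  qed
  have col0: "A' $$ (i,0) = (if i = 0 then e else 0)" if i: "i < n" for i
  proof -
    have "A' = mat_adjoint W * (A * W)" unfolding A'_def using A Wc by (simp add: assoc_mult_mat[of _ n n _ n _ n])
    then have "A' $$ (i,0) = (\<Sum>k<n. cnj (W$$(k,i)) * (e * W$$(k,0)))"
      using A Wc i n0 AW0 by (simp add: mult_entry[of _ n n _ n])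
    also have "\<dots> = e * ip n (cl W i) (cl W 0)"
      unfolding ip_def cl_def by (simp add: sum_distrib_left mult_ac)
    finally show ?thesis using unitary_cols[OF W i n0] by simp
  qed
  have adjA: "mat_adjoint A = A" using herm unfolding hermitian_mat_def by simp
  have A'herm: "mat_adjoint A' = A'"
  proof -
    have "mat_adjoint A' = mat_adjoint W * mat_adjoint (mat_adjoint W * A)"
      unfolding A'_def by (rule adj_mult[of _ n n _ n]) (use A Wc in \<open>metis adj_carrier mult_carrier_mat\<close>, use Wc in simp)
    also have "mat_adjoint (mat_adjoint W * A) = mat_adjoint A * W"
      by (subst adj_mult[of _ n n _ n]) (use A Wc in auto)
    finally show ?thesis unfolding A'_def adjA using A Wc by (simp add: assoc_mult_mat[of _ n n _ n _ n])
  qed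
  have A'h: "A'$$(i,j) = cnj (A'$$(j,i))" if "i<n" "j<n" for i j
    using A'herm A'c that by (metis adj_index carrier_matD(1,2))
  have ce: "cnj e = e" using A'h[OF n0 n0] col0[OF n0] by simp
  have row0: "A' $$ (0,j) = (if j = 0 then e else 0)" if j: "j < n" for j
    using A'h[OF n0 j] col0[OF j] ce by auto
  have ereal: "e = complex_of_real (Re e)"
    using ce by (simp add: complex_eq_iff)
  define A3 where "A3 = mat m m (\<lambda>(i,j). A' $$ (Suc i, Suc j))"
  have "hermitian_mat m A3"
    unfolding hermitian_mat_def
  proof
    show "A3 \<in> carrier_mat m m" unfolding A3_def by simp
    show "mat_adjoint A3 = A3"
      by (rule eq_matI) (auto simp: A3_def n_def A'h[symmetric])
  qed
  then obtain U3 d3 where U3: "unitary_mat m U3" and A3eq: "A3 = sdm m U3 d3"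
    using Suc.IH by blast
  have U3c: "U3 \<in> carrier_mat m m" using unitaryD[OF U3] by simp
  define B where "B = mat n n (\<lambda>(i,j). if i = 0 \<and> j = 0 then 1 else if i = 0 \<or> j = 0 then 0 else U3$$(i-1,j-1))"
  define d where "d = (\<lambda>i. if i = 0 then Re e else d3 (i - 1))"
  have Bc: "B \<in> carrier_mat n n" unfolding B_def by simp
  have B: "unitary_mat n B"
  proof -
    have "mat_adjoint B * B = 1\<^sub>m n"
    proof (rule eq_matI)
      fix i j assume "i < dim_row (1\<^sub>m n)" "j < dim_col (1\<^sub>m n)"
      then have i: "i < n" and j: "j < n" by auto
      have "(mat_adjoint B * B) $$ (i,j) = (\<Sum>k<Suc m. cnj (B$$(k,i)) * B$$(k,j))"
        using i j Bc by (subst mult_entry[of _ n n _ n]) (auto simp: n_def intro!: sum.cong)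
      also have "\<dots> = cnj (B$$(0,i)) * B$$(0,j) + (\<Sum>k<m. cnj (B$$(Suc k,i)) * B$$(Suc k,j))"
        by (rule sum.lessThan_Suc_shift)
      also have "\<dots> = 1\<^sub>m n $$ (i,j)"
      proof (cases i)
        case 0
        then show ?thesis using i j by (cases j) (auto simp: B_def n_def)
      next
        case (Suc i')
        show ?thesis
        proof (cases j)
          case 0 then show ?thesis using i j Suc by (auto simp: B_def n_def)
        next
          case (Suc j')
          have "(\<Sum>k<m. cnj (B$$(Suc k,i)) * B$$(Suc k,j)) = ip m (cl U3 i') (cl U3 j')"
            unfolding ip_def cl_def using i j \<open>i = Suc i'\<close> Suc by (auto simp: B_def n_def intro!: sum.cong)
          then show ?thesis using unitary_cols[OF U3, of i' j'] i j \<open>i = Suc i'\<close> Suc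
            by (auto simp: B_def n_def)
        qed
      qed
      finally show "(mat_adjoint B * B) $$ (i,j) = 1\<^sub>m n $$ (i,j)" .
    qed (use Bc in auto)
    then show ?thesis unfolding unitary_mat_def using Bc by simp
  qed
  have BA': "sdm n B d = A'"
  proof (rule eq_matI)
    fix i j assume "i < dim_row A'" "j < dim_col A'"
    then have i: "i < n" and j: "j < n" using A'c by auto
    have "sdm n B d $$ (i,j) = (\<Sum>k<Suc m. B$$(i,k) * d k * cnj (B$$(j,k)))"
      using sdm_index[OF Bc i j] n_def by simp
    also have "\<dots> = B$$(i,0) * d 0 * cnj (B$$(j,0)) + (\<Sum>k<m. B$$(i,Suc k) * d (Suc k) * cnj (B$$(j,Suc k)))"
      by (rule sum.lessThan_Suc_shift)
    also have "\<dots> = A' $$ (i,j)"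
    proof (cases i)
      case 0
      then show ?thesis using i j row0[OF j] ereal by (cases j) (auto simp: B_def n_def d_def)
    next
      case (Suc i')
      show ?thesis
      proof (cases j)
        case 0 then show ?thesis using i j Suc col0[OF i] by (auto simp: B_def n_def)
      next
        case (Suc j')
        have "(\<Sum>k<m. B$$(i,Suc k) * d (Suc k) * cnj (B$$(j,Suc k))) = sdm m U3 d3 $$ (i',j')"
          using i j \<open>i = Suc i'\<close> Suc by (subst sdm_index[OF U3c]) (auto simp: B_def n_def d_def intro!: sum.cong)
        also have "\<dots> = A' $$ (i,j)" using A3eq[symmetric] i j \<open>i = Suc i'\<close> Suc by (simp add: A3_def n_def)
        finally show ?thesis using i j \<open>i = Suc i'\<close> Suc by (simp add: B_def)
      qed
    qed
    finally show "sdm n B d $$ (i,j) = A' $$ (i,j)" .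
  qed (use A'c Bc in auto)
  have "sdm n (W * B) d = W * sdm n B d * mat_adjoint W"
    unfolding sdm_def using Wc Bc
    by (simp add: adj_mult[of _ n n _ n] assoc_mult_mat[of _ n n _ n _ n])
  also have "\<dots> = (W * mat_adjoint W) * A * (W * mat_adjoint W)"
    unfolding BA' A'_def using Wc A by (simp add: assoc_mult_mat[of _ n n _ n _ n])
  also have "\<dots> = A" using unitaryD(3)[OF W] A by simp
  finally have "A = sdm n (W * B) d" by simp
  moreover have "unitary_mat n (W * B)" by (rule unitary_mult[OF W B])
  ultimately show ?case unfolding n_def by blast
qed


lemma proots_linear_prod: "proots (\<Prod>a\<leftarrow>as. [:- a, 1:]) = mset (as :: complex list)"
proof (induction as)
  case (Cons a as)
  have nz: "\<And>a::complex. [:- a, 1:] \<noteq> 0" by simp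
  have "(\<Prod>a\<leftarrow>as. [:- a, 1:]) \<noteq> 0" using nz by (auto simp: prod_list_zero_iff)
  then have "proots (\<Prod>a\<leftarrow>a # as. [:- a, 1:]) = proots [:- a, 1:] + proots (\<Prod>a\<leftarrow>as. [:- a, 1:])"
  proof -
    have "(\<Prod>a\<leftarrow>a # as. [:- a, 1:]) = [:- a, 1:] * (\<Prod>a\<leftarrow>as. [:- a, 1:])" by simp
    then show ?thesis using proots_mult[OF nz[of a] \<open>(\<Prod>a\<leftarrow>as. [:- a, 1:]) \<noteq> 0\<close>] by simp
  qed
  also have "proots [:- a, 1:] = {#a#}" using proots_linear_factor[of "-a"] by simp
  finally show ?case using Cons by simp
qed simp

lemma similar_sdm: assumes "unitary_mat n U" shows "similar_mat (sdm n U d) (real_diag_mat n d)"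
proof -
  have U: "U \<in> carrier_mat n n" using unitaryD[OF assms] by simp
  have "similar_mat_wit (sdm n U d) (real_diag_mat n d) U (mat_adjoint U)"
    unfolding similar_mat_wit_def Let_def using U unitaryD[OF assms] by (simp add: sdm_def)
  then show ?thesis unfolding similar_mat_def by blast
qed

lemma char_poly_sdm: assumes "unitary_mat n U"
  shows "char_poly (sdm n U d) = (\<Prod>a\<leftarrow>map (\<lambda>i. complex_of_real (d i)) [0..<n]. [:- a, 1:])"
proof -
  have "char_poly (sdm n U d) = char_poly (real_diag_mat n d)"
    by (rule char_poly_similar[OF similar_sdm[OF assms]])
  also have "\<dots> = (\<Prod>a\<leftarrow>diag_mat (real_diag_mat n d). [:- a, 1:])"
    by (rule char_poly_upper_triangular[of _ n]) (auto simp: upper_triangular_def)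
  also have "diag_mat (real_diag_mat n d) = map (\<lambda>i. complex_of_real (d i)) [0..<n]"
    unfolding diag_mat_def by simp
  finally show ?thesis .
qed

lemma proots_sdm: assumes "unitary_mat n U"
  shows "proots (char_poly (sdm n U d)) = mset (map (\<lambda>i. complex_of_real (d i)) [0..<n])"
  unfolding char_poly_sdm[OF assms] by (rule proots_linear_prod)

lemma sum_list_upt: "sum_list (map f [0..<n]) = (\<Sum>i<n. f i)"
  by (induction n) auto

lemma sum_mset_upt: "(\<Sum>z\<in># mset (map f [0..<n]). g z) = (\<Sum>i<n. g (f i))"
  by (induction n) (auto simp: add.commute)

lemma eig_count_sdm: assumes "unitary_mat n U"
  shows "eig_count (sdm n U d) S = card {i. i < n \<and> d i \<in> S}"
proof -
  have "eig_count (sdm n U d) S = length (filter (\<lambda>z. Im z = 0 \<and> Re z \<in> S) (map (\<lambda>i. complex_of_real (d i)) [0..<n]))"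
    unfolding eig_count_def proots_sdm[OF assms] mset_filter[symmetric] size_mset ..
  also have "\<dots> = length (filter (\<lambda>i. d i \<in> S) [0..<n])"
    by (simp add: filter_map comp_def)
  also have "\<dots> = card {i. i < n \<and> d i \<in> S}"
    unfolding length_filter_conv_card by (intro arg_cong[where f=card]) auto
  finally show ?thesis .
qed

lemma adj_sdm: assumes "U \<in> carrier_mat n n" shows "mat_adjoint (sdm n U d) = sdm n U d"
  unfolding sdm_def using assms
  by (simp add: adj_mult[of _ n n _ n] assoc_mult_mat[of _ n n _ n _ n])

lemma sdm_mult: assumes "unitary_mat n U" shows "sdm n U d * sdm n U e = sdm n U (\<lambda>i. d i * e i)"
proof -
  have U: "U \<in> carrier_mat n n" using unitaryD[OF assms] by simp
  have dd: "real_diag_mat n d * real_diag_mat n e = real_diag_mat n (\<lambda>i. d i * e i)"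
    by (rule eq_matI) (auto simp: mult_diag_right[of _ n n])
  have "sdm n U d * sdm n U e = U * (real_diag_mat n d * (mat_adjoint U * U) * real_diag_mat n e) * mat_adjoint U"
    unfolding sdm_def using U by (simp add: assoc_mult_mat[of _ n n _ n _ n])
  also have "\<dots> = sdm n U (\<lambda>i. d i * e i)"
    unfolding unitaryD(2)[OF assms] sdm_def dd[symmetric] using U by (simp add: assoc_mult_mat[of _ n n _ n _ n])
  finally show ?thesis .
qed

lemma trace_norm_sdm: assumes "unitary_mat n U"
  shows "trace_norm (sdm n U d) = (\<Sum>i<n. \<bar>d i\<bar>)"
proof -
  have U: "U \<in> carrier_mat n n" using unitaryD[OF assms] by simp
  have "mat_adjoint (sdm n U d) * sdm n U d = sdm n U (\<lambda>i. d i * d i)"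
    using adj_sdm[OF U] sdm_mult[OF assms] by simp
  then have "trace_norm (sdm n U d) = (\<Sum>z\<in># mset (map (\<lambda>i. complex_of_real (d i * d i)) [0..<n]). sqrt (Re z))"
    unfolding trace_norm_def proots_sdm[OF assms] by (simp only: proots_sdm[OF assms])
  also have "\<dots> = (\<Sum>i<n. sqrt (d i * d i))"
    unfolding sum_mset_upt by simp
  also have "\<dots> = (\<Sum>i<n. \<bar>d i\<bar>)" by (simp add: real_sqrt_mult)
  finally show ?thesis .
qed


lemma sdm_cong: assumes "U \<in> carrier_mat n n" "\<And>i. i < n \<Longrightarrow> d i = e i" shows "sdm n U d = sdm n U e"
proof (rule eq_matI)
  fix i j assume "i < dim_row (sdm n U e)" "j < dim_col (sdm n U e)"
  then have i: "i < n" and j: "j < n" using assms(1) by auto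
  show "sdm n U d $$ (i,j) = sdm n U e $$ (i,j)"
    unfolding sdm_index[OF assms(1) i j] by (rule sum.cong) (use assms(2) in auto)
qed (use assms(1) in auto)

lemma sdm_add: assumes "U \<in> carrier_mat n n" shows "sdm n U d + sdm n U e = sdm n U (\<lambda>i. d i + e i)"
proof (rule eq_matI)
  fix i j assume "i < dim_row (sdm n U (\<lambda>i. d i + e i))" "j < dim_col (sdm n U (\<lambda>i. d i + e i))"
  then have i: "i < n" and j: "j < n" using assms(1) by auto
  have "(sdm n U d + sdm n U e) $$ (i,j) = sdm n U d $$ (i,j) + sdm n U e $$ (i,j)"
    using i j assms by (intro index_add_mat(1)) auto
  also have "\<dots> = (\<Sum>k<n. U$$(i,k) * d k * cnj (U$$(j,k)) + U$$(i,k) * e k * cnj (U$$(j,k)))"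
    unfolding sdm_index[OF assms(1) i j] sum.distrib ..
  also have "\<dots> = sdm n U (\<lambda>i. d i + e i) $$ (i,j)"
    unfolding sdm_index[OF assms(1) i j] by (rule sum.cong) (simp_all add: distrib_left distrib_right)
  finally show "(sdm n U d + sdm n U e) $$ (i,j) = sdm n U (\<lambda>i. d i + e i) $$ (i,j)" .
qed (use assms(1) in auto)

lemma sdm_one: assumes "unitary_mat n U" shows "sdm n U (\<lambda>_. 1) = 1\<^sub>m n"
proof -
  have U: "U \<in> carrier_mat n n" using unitaryD[OF assms] by simp
  have "real_diag_mat n (\<lambda>_. 1) = 1\<^sub>m n" by (rule eq_matI) auto
  then have "sdm n U (\<lambda>_. 1) = U * 1\<^sub>m n * mat_adjoint U" unfolding sdm_def by simp
  also have "\<dots> = U * mat_adjoint U" using U by simp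
  also have "\<dots> = 1\<^sub>m n" by (rule unitaryD(3)[OF assms])
  finally show ?thesis .
qed

lemma sdm_zero: assumes "U \<in> carrier_mat n n" shows "sdm n U (\<lambda>_. 0) = 0\<^sub>m n n"
proof (rule eq_matI)
  fix i j assume "i < dim_row (0\<^sub>m n n :: complex mat)" "j < dim_col (0\<^sub>m n n :: complex mat)"
  then have i: "i < n" and j: "j < n" by auto
  show "sdm n U (\<lambda>_. 0) $$ (i,j) = 0\<^sub>m n n $$ (i,j)"
    unfolding sdm_index[OF assms(1) i j] using i j by simp
qed (use assms(1) in auto)

definition ind :: "nat set \<Rightarrow> nat \<Rightarrow> real" where "ind T i = (if i \<in> T then 1 else 0)"

lemma rank_sdm_le: assumes "finite T" "U \<in> carrier_mat n n"
  shows "vec_space.rank n (sdm n U (ind T)) \<le> card T"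
  using assms(1)
proof (induction T rule: finite_induct)
  case empty
  have "sdm n U (ind {}) = 0\<^sub>m n n" using sdm_zero[OF assms(2)] unfolding ind_def by simp
  then show ?case using vec_space.rank_0I by simp
next
  case (insert j T)
  have split: "sdm n U (ind (insert j T)) = sdm n U (ind T) + sdm n U (ind {j})"
    unfolding sdm_add[OF assms(2)] using insert(2) by (intro arg_cong[where f="sdm n U"]) (auto simp: ind_def)
  have r1: "vec_space.rank n (sdm n U (ind {j})) \<le> 1"
  proof (rule vec_space.rank_le_1_product_entries[of _ n n "\<lambda>r. if j < n then U$$(r,j) else 0" "\<lambda>c. cnj (U$$(c,j))"])
    show "sdm n U (ind {j}) \<in> carrier_mat n n" using assms(2) by simp
    fix r c assume "r < dim_row (sdm n U (ind {j}))" "c < dim_col (sdm n U (ind {j}))"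
    then have r: "r < n" and c: "c < n" using assms(2) by auto
    have "sdm n U (ind {j}) $$ (r,c) = (\<Sum>k<n. if k = j then U$$(r,k) * cnj (U$$(c,k)) else 0)"
      unfolding sdm_index[OF assms(2) r c] by (rule sum.cong) (auto simp: ind_def)
    also have "\<dots> = (if j < n then U$$(r,j) else 0) * cnj (U$$(c,j))"
      by (subst sum.delta) auto
    finally show "sdm n U (ind {j}) $$ (r,c) = (if j < n then U$$(r,j) else 0) * cnj (U$$(c,j))" .
  qed
  have "vec_space.rank n (sdm n U (ind (insert j T))) \<le> vec_space.rank n (sdm n U (ind T)) + vec_space.rank n (sdm n U (ind {j}))"
    unfolding split by (rule vec_space.rank_subadditive[of _ n n]) (use assms(2) in auto)
  then show ?case using insert r1 by simp
qed

lemma rank_sdm: assumes "unitary_mat n U" "T \<subseteq> {..<n}"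
  shows "vec_space.rank n (sdm n U (ind T)) = card T"
proof -
  have U: "U \<in> carrier_mat n n" using unitaryD[OF assms(1)] by simp
  have fT: "finite T" using assms(2) finite_subset by blast
  define T' where "T' = {..<n} - T"
  have fT': "finite T'" unfolding T'_def by simp
  have cT': "card T' = n - card T" unfolding T'_def using assms(2) by (simp add: card_Diff_subset fT)
  have "sdm n U (ind T) + sdm n U (ind T') = sdm n U (\<lambda>_. 1)"
    unfolding sdm_add[OF U] by (rule sdm_cong[OF U]) (auto simp: ind_def T'_def)
  also have "\<dots> = 1\<^sub>m n" by (rule sdm_one[OF assms(1)])
  finally have sum1: "sdm n U (ind T) + sdm n U (ind T') = 1\<^sub>m n" .
  have "vec_space.rank n (1\<^sub>m n :: complex mat) = n"
    using vec_space.det_rank_iff[of "1\<^sub>m n :: complex mat" n] by simp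
  then have "n \<le> vec_space.rank n (sdm n U (ind T)) + vec_space.rank n (sdm n U (ind T'))"
    using vec_space.rank_subadditive[of "sdm n U (ind T)" n n "sdm n U (ind T')"] U sum1 by simp
  then have "card T \<le> vec_space.rank n (sdm n U (ind T))"
  proof -
    have "card T \<le> n" using card_mono[OF _ assms(2)] by simp
    then show ?thesis using \<open>n \<le> _\<close> rank_sdm_le[OF fT' U] cT' by arith
  qed
  moreover have "vec_space.rank n (sdm n U (ind T)) \<le> card T" by (rule rank_sdm_le[OF fT U])
  ultimately show ?thesis by simp
qed


lemma tr_mult_sdm: assumes M: "M \<in> carrier_mat n n" and Z: "Z \<in> carrier_mat n n"
  shows "tr n (M * sdm n Z x) = (\<Sum>k<n. x k * ip n (cl Z k) (mv n M (cl Z k)))"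
proof -
  have "tr n (M * sdm n Z x) = (\<Sum>i<n. \<Sum>j<n. \<Sum>k<n. x k * (cnj (Z$$(i,k)) * (M$$(i,j) * Z$$(j,k))))"
    unfolding tr_def
  proof (rule sum.cong[OF refl])
    fix i assume "i \<in> {..<n}"
    then have i: "i < n" by simp
    have "(M * sdm n Z x) $$ (i,i) = (\<Sum>j<n. M$$(i,j) * sdm n Z x $$ (j,i))"
      using M Z i by (simp add: mult_entry[of _ n n _ n])
    also have "\<dots> = (\<Sum>j<n. \<Sum>k<n. x k * (cnj (Z$$(i,k)) * (M$$(i,j) * Z$$(j,k))))"
      using Z i by (intro sum.cong refl) (simp add: sdm_index sum_distrib_left mult_ac)
    finally show "(M * sdm n Z x) $$ (i,i) = (\<Sum>j<n. \<Sum>k<n. x k * (cnj (Z$$(i,k)) * (M$$(i,j) * Z$$(j,k))))" .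
  qed
  also have "\<dots> = (\<Sum>k<n. \<Sum>i<n. \<Sum>j<n. x k * (cnj (Z$$(i,k)) * (M$$(i,j) * Z$$(j,k))))"
    by (rule sum_swap3[symmetric])
  also have "\<dots> = (\<Sum>k<n. x k * ip n (cl Z k) (mv n M (cl Z k)))"
    unfolding ip_def mv_def cl_def by (simp add: sum_distrib_left)
  finally show ?thesis .
qed

lemma nsq_col: assumes "unitary_mat n U" "k < n" shows "nsq n (cl U k) = 1"
  using nsq_ip[of n "cl U k"] unitary_cols[OF assms(1) assms(2) assms(2)] by simp

lemma mv_sdm_col: assumes "unitary_mat n U" "k < n" "i < n"
  shows "mv n (sdm n U d) (cl U k) i = d k * cl U k i"
proof -
  have U: "U \<in> carrier_mat n n" using unitaryD[OF assms(1)] by simp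
  have "mv n (sdm n U d) (cl U k) i = (\<Sum>m<n. U$$(i,m) * d m * (if m = k then 1 else 0))"
    unfolding mv_sdm[OF U assms(3)] by (intro sum.cong refl) (simp add: unitary_cols[OF assms(1)] assms(2))
  also have "\<dots> = d k * cl U k i" using assms(2) by (subst sum_delta_right) (auto simp: cl_def)
  finally show ?thesis .
qed

lemma ip_cong: "(\<And>i. i < n \<Longrightarrow> y i = y' i) \<Longrightarrow> ip n x y = ip n x y'"
  unfolding ip_def by (rule sum.cong) auto

lemma ip_scale_right: "ip n x (\<lambda>i. c * y i) = c * ip n x y"
  unfolding ip_def by (simp add: sum_distrib_left mult_ac)

lemma ip_sdm_cols: assumes "unitary_mat n U" "k < n" "l < n"
  shows "ip n (cl U l) (mv n (sdm n U d) (cl U k)) = (if l = k then complex_of_real (d k) else 0)"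
proof -
  have "ip n (cl U l) (mv n (sdm n U d) (cl U k)) = ip n (cl U l) (\<lambda>i. d k * cl U k i)"
    by (rule ip_cong) (rule mv_sdm_col[OF assms(1,2)])
  also have "\<dots> = d k * ip n (cl U l) (cl U k)" by (rule ip_scale_right)
  finally show ?thesis using unitary_cols[OF assms(1) assms(3) assms(2)] by simp
qed

lemma qf_sdm: assumes U: "U \<in> carrier_mat n n"
  shows "ip n x (mv n (sdm n U d) x) = (\<Sum>k<n. d k * (ip n (cl U k) x * cnj (ip n (cl U k) x)))"
proof -
  have cn: "cnj (ip n (cl U k) x) = (\<Sum>i<n. U$$(i,k) * cnj (x i))" for k
    unfolding ip_def cl_def cnj_sum by (simp add: mult.commute)
  have "ip n x (mv n (sdm n U d) x) = (\<Sum>i<n. cnj (x i) * (\<Sum>k<n. U$$(i,k) * d k * ip n (cl U k) x))"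
    unfolding ip_def[of n x] by (intro sum.cong refl) (simp add: mv_sdm[OF U])
  also have "\<dots> = (\<Sum>i<n. \<Sum>k<n. d k * ip n (cl U k) x * (U$$(i,k) * cnj (x i)))"
    by (intro sum.cong refl) (simp add: sum_distrib_left mult_ac)
  also have "\<dots> = (\<Sum>k<n. \<Sum>i<n. d k * ip n (cl U k) x * (U$$(i,k) * cnj (x i)))"
    by (rule sum.swap)
  also have "\<dots> = (\<Sum>k<n. d k * ip n (cl U k) x * (\<Sum>i<n. U$$(i,k) * cnj (x i)))"
    by (simp add: sum_distrib_left)
  also have "\<dots> = (\<Sum>k<n. d k * (ip n (cl U k) x * cnj (ip n (cl U k) x)))"
    by (intro sum.cong refl) (simp add: cn mult_ac)
  finally show ?thesis .
qed

lemma tr_sdm_self: assumes "unitary_mat n Z" shows "tr n (sdm n Z x) = (\<Sum>k<n. complex_of_real (x k))"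
proof -
  have Z: "Z \<in> carrier_mat n n" using unitaryD[OF assms] by simp
  have "tr n (sdm n Z x) = tr n (1\<^sub>m n * sdm n Z x)" using Z by simp
  also have "\<dots> = (\<Sum>k<n. x k * ip n (cl Z k) (mv n (1\<^sub>m n) (cl Z k)))" by (rule tr_mult_sdm) (use Z in auto)
  also have "\<dots> = (\<Sum>k<n. x k * ip n (cl Z k) (cl Z k))"
  proof (intro sum.cong refl)
    fix k assume "k \<in> {..<n}"
    have "ip n (cl Z k) (mv n (1\<^sub>m n) (cl Z k)) = ip n (cl Z k) (cl Z k)"
    proof (rule ip_cong)
      fix i assume i: "i < n"
      have "mv n (1\<^sub>m n) (cl Z k) i = (\<Sum>j<n. (if i = j then 1 else 0) * cl Z k j)"
        unfolding mv_def using i by (intro sum.cong refl) auto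
      also have "\<dots> = cl Z k i" using sum_delta_left'[OF i] by simp
      finally show "mv n (1\<^sub>m n) (cl Z k) i = cl Z k i" .
    qed
    then show "x k * ip n (cl Z k) (mv n (1\<^sub>m n) (cl Z k)) = x k * ip n (cl Z k) (cl Z k)" by simp
  qed
  also have "\<dots> = (\<Sum>k<n. complex_of_real (x k))"
    by (intro sum.cong refl) (simp add: unitary_cols[OF assms])
  finally show ?thesis .
qed

definition contr :: "nat \<Rightarrow> complex mat \<Rightarrow> bool" where
  "contr n M \<longleftrightarrow> (\<forall>z. cmod (ip n z (mv n M z)) \<le> nsq n z)"

lemma trace_bound: assumes Z: "unitary_mat n Z" and M: "M \<in> carrier_mat n n" and c: "contr n M"
  shows "cmod (tr n (M * sdm n Z x)) \<le> (\<Sum>k<n. \<bar>x k\<bar>)"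
proof -
  have Zc: "Z \<in> carrier_mat n n" using unitaryD[OF Z] by simp
  have "cmod (tr n (M * sdm n Z x)) \<le> (\<Sum>k<n. cmod (x k * ip n (cl Z k) (mv n M (cl Z k))))"
    unfolding tr_mult_sdm[OF M Zc] by (rule norm_sum)
  also have "\<dots> \<le> (\<Sum>k<n. \<bar>x k\<bar>)"
  proof (rule sum_mono)
    fix k assume "k \<in> {..<n}"
    then have k: "k < n" by simp
    have "cmod (ip n (cl Z k) (mv n M (cl Z k))) \<le> 1"
      using c nsq_col[OF Z k] unfolding contr_def by metis
    then show "cmod (x k * ip n (cl Z k) (mv n M (cl Z k))) \<le> \<bar>x k\<bar>"
      by (simp add: norm_mult mult_left_le)
  qed
  finally show ?thesis .
qed

lemma contr_sdm: assumes U: "unitary_mat n U" and s: "\<And>k. k < n \<Longrightarrow> \<bar>s k\<bar> \<le> 1"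
  shows "contr n (sdm n U s)"
  unfolding contr_def
proof
  fix z
  have Uc: "U \<in> carrier_mat n n" using unitaryD[OF U] by simp
  have "cmod (ip n z (mv n (sdm n U s) z)) \<le> (\<Sum>k<n. cmod (s k * (ip n (cl U k) z * cnj (ip n (cl U k) z))))"
    unfolding qf_sdm[OF Uc] by (rule norm_sum)
  also have "\<dots> \<le> (\<Sum>k<n. (cmod (ip n (cl U k) z))^2)"
  proof (rule sum_mono)
    fix k assume "k \<in> {..<n}"
    then have "\<bar>s k\<bar> \<le> 1" using s by simp
    then show "cmod (s k * (ip n (cl U k) z * cnj (ip n (cl U k) z))) \<le> (cmod (ip n (cl U k) z))^2"
      by (simp add: norm_mult power2_eq_square mult_left_le_one_le)
  qed
  also have "\<dots> = nsq n z" by (rule parseval[OF U])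
  finally show "cmod (ip n z (mv n (sdm n U s) z)) \<le> nsq n z" .
qed


lemma sum_lessThan_add: "(\<Sum>r<m+(k::nat). f r) = (\<Sum>r<m. f r) + (\<Sum>a<k. f (m+a))"
  by (induction k) (auto simp: add.assoc)

lemma sum_split_prod: "(\<Sum>r<dS*(dB::nat). f r) = (\<Sum>i<dS. \<Sum>a<dB. f (i*dB + a))"
proof (induction dS)
  case (Suc k)
  have e: "Suc k * dB = k*dB + dB" by simp
  have "(\<Sum>r<Suc k * dB. f r) = (\<Sum>r<k*dB. f r) + (\<Sum>a<dB. f (k*dB+a))"
    unfolding e by (rule sum_lessThan_add)
  then show ?case using Suc by simp
qed simp

lemma idx_div: "a < dB \<Longrightarrow> (i*dB + a) div dB = (i::nat)"
  by simp
lemma idx_mod: "a < dB \<Longrightarrow> (i*dB + a) mod dB = (a::nat)"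
  by simp
lemma idx_lt: "i < dS \<Longrightarrow> a < dB \<Longrightarrow> i*dB + a < dS*(dB::nat)"
proof -
  assume "i < dS" "a < dB"
  then have "i*dB + a < i*dB + dB" by simp
  also have "\<dots> = Suc i * dB" by simp
  also have "\<dots> \<le> dS * dB" using \<open>i < dS\<close> by (intro mult_right_mono) auto
  finally show ?thesis .
qed

definition kr :: "nat \<Rightarrow> nat \<Rightarrow> complex mat \<Rightarrow> complex mat" where
  "kr dS dB M = mat (dS*dB) (dS*dB) (\<lambda>(r,c). if r mod dB = c mod dB then M$$(r div dB, c div dB) else 0)"

lemma kr_carrier[simp]: "kr dS dB M \<in> carrier_mat (dS*dB) (dS*dB)"
  unfolding kr_def by simp

lemma kr_idx: "i < dS \<Longrightarrow> a < dB \<Longrightarrow> j < dS \<Longrightarrow> b < dB \<Longrightarrow>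
  kr dS dB M $$ (i*dB+a, j*dB+b) = (if a = b then M$$(i,j) else 0)"
  unfolding kr_def using idx_lt[of i dS a dB] idx_lt[of j dS b dB] by simp

lemma pt_index: "i < dS \<Longrightarrow> j < dS \<Longrightarrow> partial_trace_B dS dB X $$ (i,j) = (\<Sum>a<dB. X $$ (i*dB + a, j*dB + a))"
  unfolding partial_trace_B_def by simp

lemma pt_carrier[simp]: "partial_trace_B dS dB X \<in> carrier_mat dS dS"
  unfolding partial_trace_B_def by simp

lemma pt_herm: assumes "hermitian_mat (dS*dB) X" shows "hermitian_mat dS (partial_trace_B dS dB X)"
  unfolding hermitian_mat_def
proof
  show "partial_trace_B dS dB X \<in> carrier_mat dS dS" by simp
  show "mat_adjoint (partial_trace_B dS dB X) = partial_trace_B dS dB X"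
  proof (rule eq_matI)
    fix i j assume "i < dim_row (partial_trace_B dS dB X)" "j < dim_col (partial_trace_B dS dB X)"
    then have i: "i < dS" and j: "j < dS" by (auto simp: partial_trace_B_def)
    have "mat_adjoint (partial_trace_B dS dB X) $$ (i,j) = cnj (partial_trace_B dS dB X $$ (j,i))"
      using i j by (subst adj_index) (auto simp: partial_trace_B_def)
    also have "\<dots> = (\<Sum>a<dB. cnj (X $$ (j*dB + a, i*dB + a)))" using i j by (simp add: pt_index cnj_sum)
    also have "\<dots> = (\<Sum>a<dB. X $$ (i*dB + a, j*dB + a))"
    proof (rule sum.cong[OF refl])
      fix a assume "a \<in> {..<dB}"
      then have a: "a < dB" by simp
      show "cnj (X $$ (j*dB + a, i*dB + a)) = X $$ (i*dB + a, j*dB + a)"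
        using hermitianD[OF assms idx_lt[OF i a] idx_lt[OF j a]] by simp
    qed
    also have "\<dots> = partial_trace_B dS dB X $$ (i,j)" using i j by (simp add: pt_index)
    finally show "mat_adjoint (partial_trace_B dS dB X) $$ (i,j) = partial_trace_B dS dB X $$ (i,j)" .
  qed (auto simp: partial_trace_B_def)
qed

lemma tr_pt: assumes M: "M \<in> carrier_mat dS dS" and X: "X \<in> carrier_mat (dS*dB) (dS*dB)"
  shows "tr dS (M * partial_trace_B dS dB X) = tr (dS*dB) (kr dS dB M * X)"
proof -
  let ?N = "dS*dB"
  have "tr ?N (kr dS dB M * X) = (\<Sum>r<?N. \<Sum>c<?N. kr dS dB M $$ (r,c) * X $$ (c,r))"
    unfolding tr_def using X by (intro sum.cong refl) (simp add: mult_entry[of _ ?N ?N _ ?N])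
  also have "\<dots> = (\<Sum>i<dS. \<Sum>a<dB. \<Sum>j<dS. \<Sum>b<dB. kr dS dB M $$ (i*dB+a,j*dB+b) * X $$ (j*dB+b,i*dB+a))"
    unfolding sum_split_prod ..
  also have "\<dots> = (\<Sum>i<dS. \<Sum>a<dB. \<Sum>j<dS. M$$(i,j) * X $$ (j*dB+a,i*dB+a))"
  proof (intro sum.cong refl)
    fix i a j assume "i \<in> {..<dS}" "a \<in> {..<dB}" "j \<in> {..<dS}"
    then have i: "i < dS" and a: "a < dB" and j: "j < dS" by auto
    have "(\<Sum>b<dB. kr dS dB M $$ (i*dB+a,j*dB+b) * X $$ (j*dB+b,i*dB+a))
       = (\<Sum>b<dB. (if b = a then 1 else 0) * (M$$(i,j) * X $$ (j*dB+b,i*dB+a)))"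
      by (intro sum.cong refl) (auto simp: kr_idx[OF i a j])
    also have "\<dots> = M$$(i,j) * X $$ (j*dB+a,i*dB+a)" by (rule sum_delta_left[OF a])
    finally show "(\<Sum>b<dB. kr dS dB M $$ (i*dB+a,j*dB+b) * X $$ (j*dB+b,i*dB+a)) = M$$(i,j) * X $$ (j*dB+a,i*dB+a)" .
  qed
  also have "\<dots> = (\<Sum>i<dS. \<Sum>j<dS. \<Sum>a<dB. M$$(i,j) * X $$ (j*dB+a,i*dB+a))"
    by (rule sum.cong[OF refl], rule sum.swap)
  also have "\<dots> = tr dS (M * partial_trace_B dS dB X)"
    unfolding tr_def using M by (intro sum.cong refl) (simp add: mult_entry[of _ dS dS _ dS] pt_index sum_distrib_left)
  finally show ?thesis by simp
qed

lemma nsq_split: "nsq (dS*dB) z = (\<Sum>a<dB. nsq dS (\<lambda>i. z (i*dB + a)))"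
  unfolding nsq_def sum_split_prod by (rule sum.swap)

lemma contr_kr: assumes M: "M \<in> carrier_mat dS dS" and c: "contr dS M" shows "contr (dS*dB) (kr dS dB M)"
  unfolding contr_def
proof
  fix z
  let ?N = "dS*dB"
  have "ip ?N z (mv ?N (kr dS dB M) z) = (\<Sum>i<dS. \<Sum>a<dB. cnj (z (i*dB+a)) * (\<Sum>j<dS. \<Sum>b<dB. kr dS dB M $$ (i*dB+a,j*dB+b) * z (j*dB+b)))"
    unfolding ip_def mv_def sum_split_prod ..
  also have "\<dots> = (\<Sum>i<dS. \<Sum>a<dB. cnj (z (i*dB+a)) * (\<Sum>j<dS. M$$(i,j) * z (j*dB+a)))"
  proof (intro sum.cong refl arg_cong2[where f="(*)"])
    fix i a j assume "i \<in> {..<dS}" "a \<in> {..<dB}" "j \<in> {..<dS}"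
    then have i: "i < dS" and a: "a < dB" and j: "j < dS" by auto
    have "(\<Sum>b<dB. kr dS dB M $$ (i*dB+a,j*dB+b) * z (j*dB+b)) = (\<Sum>b<dB. (if b = a then 1 else 0) * (M$$(i,j) * z (j*dB+b)))"
      by (intro sum.cong refl) (auto simp: kr_idx[OF i a j])
    also have "\<dots> = M$$(i,j) * z (j*dB+a)" by (rule sum_delta_left[OF a])
    finally show "(\<Sum>b<dB. kr dS dB M $$ (i*dB+a,j*dB+b) * z (j*dB+b)) = M$$(i,j) * z (j*dB+a)" .
  qed
  also have "\<dots> = (\<Sum>a<dB. ip dS (\<lambda>i. z (i*dB+a)) (mv dS M (\<lambda>i. z (i*dB+a))))"
    unfolding ip_def mv_def by (rule sum.swap)
  finally have eq: "ip ?N z (mv ?N (kr dS dB M) z) = (\<Sum>a<dB. ip dS (\<lambda>i. z (i*dB+a)) (mv dS M (\<lambda>i. z (i*dB+a))))" .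
  have "cmod (ip ?N z (mv ?N (kr dS dB M) z)) \<le> (\<Sum>a<dB. cmod (ip dS (\<lambda>i. z (i*dB+a)) (mv dS M (\<lambda>i. z (i*dB+a)))))"
    unfolding eq by (rule norm_sum)
  also have "\<dots> \<le> (\<Sum>a<dB. nsq dS (\<lambda>i. z (i*dB + a)))"
    by (rule sum_mono) (use c in \<open>simp add: contr_def\<close>)
  also have "\<dots> = nsq ?N z" by (rule nsq_split[symmetric])
  finally show "cmod (ip ?N z (mv ?N (kr dS dB M) z)) \<le> nsq ?N z" .
qed

definition sgnr :: "real \<Rightarrow> real" where "sgnr t = (if t < 0 then -1 else 1)"

lemma part1: assumes X: "hermitian_mat (dS*dB) X"
  shows "trace_norm (partial_trace_B dS dB X) \<le> trace_norm X"
proof -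
  let ?N = "dS*dB"
  let ?Y = "partial_trace_B dS dB X"
  obtain Z x where Z: "unitary_mat ?N Z" and Xe: "X = sdm ?N Z x" using spectral[OF X] by blast
  obtain Z' y where Z': "unitary_mat dS Z'" and Ye: "?Y = sdm dS Z' y" using spectral[OF pt_herm[OF X]] by blast
  have Zc: "Z \<in> carrier_mat ?N ?N" and Z'c: "Z' \<in> carrier_mat dS dS" using unitaryD Z Z' by auto
  define S where "S = sdm dS Z' (\<lambda>k. sgnr (y k))"
  have Sc: "S \<in> carrier_mat dS dS" unfolding S_def using Z'c by simp
  have "tr dS (S * ?Y) = (\<Sum>k<dS. y k * ip dS (cl Z' k) (mv dS S (cl Z' k)))"
    unfolding Ye by (rule tr_mult_sdm[OF Sc Z'c])
  also have "\<dots> = (\<Sum>k<dS. complex_of_real \<bar>y k\<bar>)"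
    by (intro sum.cong refl) (simp add: S_def ip_sdm_cols[OF Z'] sgnr_def)
  finally have t1: "tr dS (S * ?Y) = complex_of_real (trace_norm ?Y)"
    unfolding Ye trace_norm_sdm[OF Z'] by simp
  have "tr dS (S * ?Y) = tr ?N (kr dS dB S * X)" by (rule tr_pt[OF Sc]) (use X in \<open>simp add: hermitian_mat_def\<close>)
  moreover have "cmod (tr ?N (kr dS dB S * X)) \<le> (\<Sum>k<?N. \<bar>x k\<bar>)"
    unfolding Xe
    by (rule trace_bound[OF Z kr_carrier contr_kr[OF Sc]]) (unfold S_def, rule contr_sdm[OF Z'], simp add: sgnr_def)
  moreover have "trace_norm X = (\<Sum>k<?N. \<bar>x k\<bar>)" unfolding Xe by (rule trace_norm_sdm[OF Z])
  ultimately have "cmod (complex_of_real (trace_norm ?Y)) \<le> trace_norm X"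
    using t1 by simp
  then show ?thesis by simp
qed


lemma ip_add_right: "ip n x (\<lambda>i. y i + z i) = ip n x y + ip n x z"
  unfolding ip_def by (simp add: distrib_left sum.distrib)
lemma ip_diff_right: "ip n x (\<lambda>i. y i - z i) = ip n x y - ip n x z"
  unfolding ip_def by (simp add: right_diff_distrib sum_subtractf)
lemma ip_scale_left: "ip n (\<lambda>i. c * y i) x = cnj c * ip n y x"
  unfolding ip_def by (simp add: sum_distrib_left mult_ac)
lemma ip_conj: "cnj (ip n x y) = ip n y x"
  unfolding ip_def cnj_sum by (simp add: mult.commute)
lemma ip_cong_left: "(\<And>i. i < n \<Longrightarrow> y i = y' i) \<Longrightarrow> ip n y x = ip n y' x"
  unfolding ip_def by (rule sum.cong) auto
lemma ip_self_real: "ip n x x = complex_of_real (nsq n x)"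
  using nsq_ip by simp

lemma sum_delta_right': "j < (n::nat) \<Longrightarrow> (\<Sum>i<n. f i * (if j = i then (1::complex) else 0)) = f j"
proof -
  assume j: "j < n"
  have "(\<Sum>i<n. f i * (if j = i then (1::complex) else 0)) = (\<Sum>i<n. if i = j then f i else 0)"
    by (intro sum.cong) auto
  also have "\<dots> = f j" using j by (subst sum.delta) auto
  finally show ?thesis .
qed

lemma resolution: assumes "unitary_mat n C"
  shows "ip n x y = (\<Sum>m<n. ip n x (cl C m) * ip n (cl C m) y)"
proof -
  have "(\<Sum>m<n. ip n x (cl C m) * ip n (cl C m) y) = (\<Sum>m<n. \<Sum>i<n. \<Sum>j<n. cnj (x i) * y j * (C$$(i,m) * cnj (C$$(j,m))))"
    unfolding ip_def cl_def sum_product by (intro sum.cong refl) (simp add: mult_ac)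
  also have "\<dots> = (\<Sum>i<n. \<Sum>j<n. \<Sum>m<n. cnj (x i) * y j * (C$$(i,m) * cnj (C$$(j,m))))"
    by (rule sum_swap3)
  also have "\<dots> = (\<Sum>i<n. \<Sum>j<n. cnj (x i) * y j * (if i = j then 1 else 0))"
    by (intro sum.cong refl) (simp add: unitary_rows[OF assms] flip: sum_distrib_left)
  also have "\<dots> = ip n x y"
    unfolding ip_def by (intro sum.cong refl) (simp add: sum_delta_right')
  finally show ?thesis by simp
qed

lemma mv_herm: assumes "hermitian_mat n P"
  shows "ip n x (mv n P y) = ip n (mv n P x) y"
proof -
  have "ip n x (mv n P y) = (\<Sum>i<n. \<Sum>j<n. cnj (x i) * P$$(i,j) * y j)"
    unfolding ip_def mv_def by (simp add: sum_distrib_left mult_ac)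
  also have "\<dots> = (\<Sum>j<n. \<Sum>i<n. cnj (x i) * P$$(i,j) * y j)" by (rule sum.swap)
  also have "\<dots> = ip n (mv n P x) y"
    unfolding ip_def mv_def
  proof (intro sum.cong refl)
    fix j assume "j \<in> {..<n}"
    then have j: "j < n" by simp
    have "(\<Sum>i<n. cnj (x i) * P$$(i,j) * y j) = (\<Sum>i<n. cnj (P$$(j,i) * x i)) * y j"
      by (subst sum_distrib_right, rule sum.cong[OF refl]) (simp add: hermitianD[OF assms _ j])
    also have "\<dots> = cnj (\<Sum>i<n. P$$(j,i) * x i) * y j" by (simp add: cnj_sum)
    finally show "(\<Sum>i<n. cnj (x i) * P$$(i,j) * y j) = cnj (\<Sum>i<n. P$$(j,i) * x i) * y j" .
  qed
  finally show ?thesis .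
qed

lemma sdm_herm: "U \<in> carrier_mat n n \<Longrightarrow> hermitian_mat n (sdm n U d)"
  unfolding hermitian_mat_def using adj_sdm by simp

lemma mv_mult: assumes "A \<in> carrier_mat n n" "B \<in> carrier_mat n n" "i < n"
  shows "mv n (A * B) x i = mv n A (mv n B x) i"
proof -
  have "mv n (A * B) x i = (\<Sum>j<n. \<Sum>k<n. A$$(i,k) * B$$(k,j) * x j)"
    unfolding mv_def using assms by (intro sum.cong refl) (simp add: mult_entry[of _ n n _ n] sum_distrib_right)
  also have "\<dots> = (\<Sum>k<n. \<Sum>j<n. A$$(i,k) * B$$(k,j) * x j)" by (rule sum.swap)
  also have "\<dots> = mv n A (mv n B x) i" unfolding mv_def by (simp add: sum_distrib_left mult_ac)
  finally show ?thesis .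
qed

lemma mv_minus: assumes "A \<in> carrier_mat n n" "B \<in> carrier_mat n n" "i < n"
  shows "mv n (A - B) x i = mv n A x i - mv n B x i"
  unfolding mv_def using assms by (simp add: sum_subtractf left_diff_distrib)

lemma ind_idem: "ind T i * ind T i = ind T i"
  unfolding ind_def by simp

lemma sdm_idem: assumes "unitary_mat n U" "i < n"
  shows "mv n (sdm n U (ind T)) (mv n (sdm n U (ind T)) x) i = mv n (sdm n U (ind T)) x i"
proof -
  have U: "U \<in> carrier_mat n n" using unitaryD[OF assms(1)] by simp
  have "mv n (sdm n U (ind T)) (mv n (sdm n U (ind T)) x) i = mv n (sdm n U (ind T) * sdm n U (ind T)) x i"
    using U assms(2) by (simp add: mv_mult)
  also have "sdm n U (ind T) * sdm n U (ind T) = sdm n U (ind T)"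
    unfolding sdm_mult[OF assms(1)] ind_idem ..
  finally show ?thesis .
qed

lemma ip_col_sdm: assumes "unitary_mat n U" "j < n"
  shows "ip n (cl U j) (mv n (sdm n U e) x) = e j * ip n (cl U j) x"
proof -
  have U: "U \<in> carrier_mat n n" using unitaryD[OF assms(1)] by simp
  have "ip n (cl U j) (mv n (sdm n U e) x) = ip n (mv n (sdm n U e) (cl U j)) x"
    by (rule mv_herm[OF sdm_herm[OF U]])
  also have "\<dots> = ip n (\<lambda>i. complex_of_real (e j) * cl U j i) x"
    by (rule ip_cong_left) (rule mv_sdm_col[OF assms])
  also have "\<dots> = e j * ip n (cl U j) x" by (simp add: ip_scale_left)
  finally show ?thesis .
qed

lemma ip_diff_left: "ip n (\<lambda>i. y i - z i) x = ip n y x - ip n z x"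
  unfolding ip_def by (simp add: left_diff_distrib sum_subtractf)

lemma ip_sum_right: "ip n x (\<lambda>i. \<Sum>k\<in>K. c k * v k i) = (\<Sum>k\<in>K. c k * ip n x (v k))"
proof -
  have "ip n x (\<lambda>i. \<Sum>k\<in>K. c k * v k i) = (\<Sum>i<n. \<Sum>k\<in>K. c k * (cnj (x i) * v k i))"
    unfolding ip_def by (intro sum.cong refl) (simp add: sum_distrib_left mult_ac)
  also have "\<dots> = (\<Sum>k\<in>K. \<Sum>i<n. c k * (cnj (x i) * v k i))" by (rule sum.swap)
  also have "\<dots> = (\<Sum>k\<in>K. c k * ip n x (v k))" unfolding ip_def by (simp add: sum_distrib_left)
  finally show ?thesis .
qed

lemma ip_sum_left: "ip n (\<lambda>i. \<Sum>k\<in>K. c k * v k i) x = (\<Sum>k\<in>K. cnj (c k) * ip n (v k) x)"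
proof -
  have "ip n (\<lambda>i. \<Sum>k\<in>K. c k * v k i) x = cnj (ip n x (\<lambda>i. \<Sum>k\<in>K. c k * v k i))"
    by (simp add: ip_conj)
  also have "\<dots> = (\<Sum>k\<in>K. cnj (c k) * ip n (v k) x)"
    unfolding ip_sum_right cnj_sum by (simp add: ip_conj)
  finally show ?thesis .
qed

lemma bessel: assumes fin: "finite K"
  and orth: "\<And>k l. k \<in> K \<Longrightarrow> l \<in> K \<Longrightarrow> ip n (f k) (f l) = (if k = l then 1 else 0)"
  shows "(\<Sum>k\<in>K. (cmod (ip n (f k) y))^2) \<le> nsq n y"
proof -
  define a where "a k = ip n (f k) y" for k
  define g where "g i = (\<Sum>k\<in>K. a k * f k i)" for i
  have gf: "ip n g (f l) = cnj (a l)" if l: "l \<in> K" for l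
  proof -
    have "ip n g (f l) = (\<Sum>k\<in>K. cnj (a k) * (if k = l then 1 else 0))"
      unfolding g_def ip_sum_left by (intro sum.cong refl) (simp add: orth l)
    also have "\<dots> = cnj (a l)" using l fin by (simp add: if_distrib cong: if_cong)
    finally show ?thesis .
  qed
  have gy: "ip n g y = (\<Sum>k\<in>K. cnj (a k) * a k)"
    unfolding g_def ip_sum_left a_def ..
  have yg: "ip n y g = (\<Sum>k\<in>K. a k * cnj (a k))"
    unfolding g_def ip_sum_right a_def ip_conj ..
  have "ip n g g = ip n g (\<lambda>i. \<Sum>k\<in>K. a k * f k i)" unfolding g_def[abs_def] ..
  also have "\<dots> = (\<Sum>k\<in>K. a k * cnj (a k))"
    unfolding ip_sum_right by (intro sum.cong refl) (simp add: gf)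
  finally have gg: "ip n g g = (\<Sum>k\<in>K. a k * cnj (a k))" .
  have "complex_of_real (nsq n (\<lambda>i. y i - g i)) = ip n (\<lambda>i. y i - g i) (\<lambda>i. y i - g i)" by (rule nsq_ip)
  also have "\<dots> = ip n y y - ip n y g - (ip n g y - ip n g g)"
    unfolding ip_diff_left ip_diff_right by (simp add: algebra_simps)
  also have "\<dots> = ip n y y - (\<Sum>k\<in>K. a k * cnj (a k))"
    unfolding gy yg gg by (simp add: mult.commute)
  also have "(\<Sum>k\<in>K. a k * cnj (a k)) = (\<Sum>k\<in>K. complex_of_real ((cmod (a k))^2))"
    by (rule sum.cong[OF refl]) (simp only: cns mult.commute)
  also have "ip n y y - (\<Sum>k\<in>K. complex_of_real ((cmod (a k))^2)) = complex_of_real (nsq n y - (\<Sum>k\<in>K. (cmod (a k))^2))"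
    unfolding nsq_ip[symmetric] of_real_diff of_real_sum ..
  finally have "nsq n (\<lambda>i. y i - g i) = nsq n y - (\<Sum>k\<in>K. (cmod (a k))^2)" using of_real_eq_iff by blast
  then show ?thesis using nsq_nonneg[of n "\<lambda>i. y i - g i"] unfolding a_def by simp
qed


lemma cs_sum: fixes a :: "nat \<Rightarrow> real" assumes "finite A"
  shows "(\<Sum>k\<in>A. a k)^2 \<le> real (card A) * (\<Sum>k\<in>A. (a k)^2)"
proof -
  have "(\<Sum>k\<in>A. a k)^2 = (\<Sum>i\<in>A. \<Sum>j\<in>A. a i * a j)"
    by (simp add: power2_eq_square sum_product)
  also have "\<dots> \<le> (\<Sum>i\<in>A. \<Sum>j\<in>A. ((a i)^2 + (a j)^2) / 2)"
  proof (intro sum_mono)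
    fix i j
    have "0 \<le> (a i - a j)^2" by simp
    then show "a i * a j \<le> ((a i)^2 + (a j)^2) / 2" by (simp add: power2_eq_square algebra_simps)
  qed
  also have "\<dots> = (\<Sum>i\<in>A. \<Sum>j\<in>A. (a i)^2 / 2) + (\<Sum>i\<in>A. \<Sum>j\<in>A. (a j)^2 / 2)"
    by (simp only: add_divide_distrib sum.distrib)
  also have "(\<Sum>i\<in>A. \<Sum>j\<in>A. (a j)^2 / 2) = (\<Sum>i\<in>A. \<Sum>j\<in>A. (a i)^2 / 2)"
    by (rule sum.swap)
  also have "(\<Sum>i\<in>A. \<Sum>j\<in>A. (a i)^2 / 2) = (\<Sum>i\<in>A. real (card A) * ((a i)^2 / 2))"
    by simp
  also have "(\<Sum>i\<in>A. real (card A) * ((a i)^2 / 2)) + (\<Sum>i\<in>A. real (card A) * ((a i)^2 / 2)) = real (card A) * (\<Sum>k\<in>A. (a k)^2)"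
    by (simp add: sum_distrib_left[symmetric] sum_divide_distrib[symmetric])
  finally show ?thesis .
qed

lemma proj_res: assumes U: "unitary_mat n U" and C: "unitary_mat n C"
  shows "(\<Sum>m<n. ip n x (mv n (sdm n U (ind S)) (cl C m)) * ip n (cl C m) (mv n (sdm n U (ind S)) y))
       = ip n x (mv n (sdm n U (ind S)) y)"
proof -
  have Uc: "U \<in> carrier_mat n n" using unitaryD[OF U] by simp
  let ?P = "sdm n U (ind S)"
  have h: "hermitian_mat n ?P" by (rule sdm_herm[OF Uc])
  have "(\<Sum>m<n. ip n x (mv n ?P (cl C m)) * ip n (cl C m) (mv n ?P y)) = (\<Sum>m<n. ip n (mv n ?P x) (cl C m) * ip n (cl C m) (mv n ?P y))"
    by (simp add: mv_herm[OF h])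
  also have "\<dots> = ip n (mv n ?P x) (mv n ?P y)" by (rule resolution[OF C, symmetric])
  also have "\<dots> = ip n x (mv n ?P (mv n ?P y))" by (simp add: mv_herm[OF h])
  also have "\<dots> = ip n x (mv n ?P y)" by (rule ip_cong) (rule sdm_idem[OF U])
  finally show ?thesis .
qed

lemma sum_if_right: "j < (n::nat) \<Longrightarrow> (\<Sum>i<n. f i * (if i = j then c else 0)) = f j * (c::complex)"
  by (subst sum.cong[OF refl, of _ _ "\<lambda>i. if i = j then f i * c else 0"]) (auto simp: sum.delta)

lemma sum_if_left: "j < (n::nat) \<Longrightarrow> (\<Sum>i<n. (if j = i then c i else 0) * f i) = c j * (f j :: complex)"
  by (subst sum.cong[OF refl, of _ _ "\<lambda>i. if i = j then c i * f i else 0"]) (auto simp: sum.delta)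

context
  fixes n :: nat and U W C :: "complex mat" and lam :: "nat \<Rightarrow> real" and Ji K :: "nat set"
  assumes U: "unitary_mat n U" and W: "unitary_mat n W" and C: "unitary_mat n C"
    and RF: "sdm n U (ind Ji) - sdm n W (ind K) = sdm n C lam"
begin

abbreviation "RR \<equiv> sdm n U (ind Ji)"
abbreviation "FF \<equiv> sdm n W (ind K)"
abbreviation "Rp a b \<equiv> ip n (cl C a) (mv n RR (cl C b))"
abbreviation "Fp a b \<equiv> ip n (cl C a) (mv n FF (cl C b))"

lemma Uc: "U \<in> carrier_mat n n" using unitaryD[OF U] by simp
lemma Wc: "W \<in> carrier_mat n n" using unitaryD[OF W] by simp
lemma Cc: "C \<in> carrier_mat n n" using unitaryD[OF C] by simp

lemma E1: assumes "k < n" "i < n" shows "mv n RR (cl C k) i - mv n FF (cl C k) i = lam k * cl C k i"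
proof -
  have "mv n RR (cl C k) i - mv n FF (cl C k) i = mv n (RR - FF) (cl C k) i"
    using Uc Wc assms by (simp add: mv_minus)
  also have "\<dots> = lam k * cl C k i" unfolding RF by (rule mv_sdm_col[OF C assms])
  finally show ?thesis .
qed

lemma E2: assumes "a < n" "b < n" shows "Rp a b - Fp a b = (if a = b then complex_of_real (lam b) else 0)"
proof -
  have "Rp a b - Fp a b = ip n (cl C a) (\<lambda>i. mv n RR (cl C b) i - mv n FF (cl C b) i)"
    by (simp add: ip_diff_right)
  also have "\<dots> = ip n (cl C a) (\<lambda>i. lam b * cl C b i)"
    by (rule ip_cong) (rule E1[OF assms(2)])
  also have "\<dots> = lam b * ip n (cl C a) (cl C b)" by (rule ip_scale_right)
  finally show ?thesis using unitary_cols[OF C assms] by simp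
qed

lemma Rp_idem: "(\<Sum>m<n. Rp a m * Rp m b) = Rp a b" by (rule proj_res[OF U C])
lemma Fp_idem: "(\<Sum>m<n. Fp a m * Fp m b) = Fp a b" by (rule proj_res[OF W C])

lemma E2': assumes "a < n" "b < n" shows "Rp a b = (if a = b then complex_of_real (lam b) else 0) + Fp a b"
proof -
  have "Rp a b = (Rp a b - Fp a b) + Fp a b" by simp
  then show ?thesis unfolding E2[OF assms] .
qed

lemma E34: assumes a: "a < n" and b: "b < n" shows "Fp a b * (1 + lam b) = Rp a b * (1 - lam a)"
proof -
  have "(\<Sum>m<n. Fp a m * Rp m b) = (\<Sum>m<n. Fp a m * ((if m = b then complex_of_real (lam b) else 0) + Fp m b))"
    by (intro sum.cong refl) (simp add: E2'[OF _ b])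
  also have "\<dots> = (\<Sum>m<n. Fp a m * (if m = b then complex_of_real (lam b) else 0)) + (\<Sum>m<n. Fp a m * Fp m b)"
    by (simp only: distrib_left sum.distrib)
  also have "(\<Sum>m<n. Fp a m * (if m = b then complex_of_real (lam b) else 0)) = Fp a b * lam b"
    by (rule sum_if_right[OF b])
  also have "(\<Sum>m<n. Fp a m * Fp m b) = Fp a b" by (rule Fp_idem)
  finally have 1: "(\<Sum>m<n. Fp a m * Rp m b) = Fp a b * (1 + lam b)" by (simp add: algebra_simps)
  have "(\<Sum>m<n. Fp a m * Rp m b) = (\<Sum>m<n. (Rp a m - (if a = m then complex_of_real (lam m) else 0)) * Rp m b)"
    by (intro sum.cong refl) (simp add: E2'[OF a])
  also have "\<dots> = (\<Sum>m<n. Rp a m * Rp m b) - (\<Sum>m<n. (if a = m then complex_of_real (lam m) else 0) * Rp m b)"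
    by (simp only: left_diff_distrib sum_subtractf)
  also have "(\<Sum>m<n. (if a = m then complex_of_real (lam m) else 0) * Rp m b) = lam a * Rp a b"
    by (rule sum_if_left[OF a])
  also have "(\<Sum>m<n. Rp a m * Rp m b) = Rp a b" by (rule Rp_idem)
  finally show ?thesis using 1 by (simp add: algebra_simps)
qed

lemma Rp_herm: "Rp a b = cnj (Rp b a)"
  unfolding ip_conj by (rule mv_herm[OF sdm_herm[OF Uc]])

lemma qf_cols: assumes V: "unitary_mat n V" shows
  "ip n x (mv n (sdm n V (ind S)) x) = complex_of_real (\<Sum>l<n. ind S l * (cmod (ip n (cl V l) x))^2)"
proof -
  have Vc: "V \<in> carrier_mat n n" using unitaryD[OF V] by simp
  show ?thesis unfolding qf_sdm[OF Vc] of_real_sum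
    by (rule sum.cong[OF refl]) (simp only: of_real_mult cns mult.commute)
qed

lemma Fp_diag: "Fp k k = complex_of_real (\<Sum>l<n. ind K l * (cmod (ip n (cl W l) (cl C k)))^2)"
  by (rule qf_cols[OF W])

lemma diag_facts: assumes k: "k < n" and pos: "lam k > 0"
  shows "Fp k k = complex_of_real ((1 - lam k) / 2)" "Rp k k = complex_of_real ((1 + lam k) / 2)"
proof -
  have e1: "Fp k k * (1 + lam k) = Rp k k * (1 - lam k)" by (rule E34[OF k k])
  have e2: "Rp k k = lam k + Fp k k" using E2'[OF k k] by simp
  have "complex_of_real (lam k) * (2 * Fp k k - (1 - lam k)) = 0"
    using e1 unfolding e2 by (simp add: algebra_simps)
  then have "2 * Fp k k = 1 - lam k" using pos by simp
  then show f: "Fp k k = complex_of_real ((1 - lam k) / 2)" by (simp add: field_simps)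
  show "Rp k k = complex_of_real ((1 + lam k) / 2)" unfolding e2 f by (simp add: field_simps)
qed

lemma offdiag: assumes k: "k < n" and l: "l < n" and kl: "k \<noteq> l" and pk: "lam k > 0" and pl: "lam l > 0"
  shows "Rp k l = 0"
proof -
  have e1: "Fp k l * (1 + lam l) = Rp k l * (1 - lam k)" by (rule E34[OF k l])
  have e2: "Rp k l = Fp k l" using E2'[OF k l] kl by simp
  have "Fp k l * (lam k + lam l) = 0" using e1 unfolding e2 by (simp add: algebra_simps)
  moreover have "complex_of_real (lam k) + complex_of_real (lam l) \<noteq> 0"
  proof -
    have "lam k + lam l \<noteq> 0" using pk pl by simp
    then have "complex_of_real (lam k + lam l) \<noteq> 0" by (metis of_real_eq_0_iff)
    then show ?thesis by simp
  qed
  ultimately have "Fp k l = 0" by simp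
  then show ?thesis using e2 by simp
qed

abbreviation "rk k \<equiv> mv n RR (cl C k)"

lemma ip_rk: "ip n (rk k) (rk l) = Rp k l"
proof -
  have "ip n (rk k) (rk l) = ip n (cl C k) (mv n RR (rk l))" by (simp add: mv_herm[OF sdm_herm[OF Uc]])
  also have "\<dots> = Rp k l" by (rule ip_cong) (rule sdm_idem[OF U])
  finally show ?thesis .
qed

lemma ip_rk_proj: "ip n (rk k) y = ip n (rk k) (mv n RR y)"
proof -
  have "ip n (rk k) y = ip n (cl C k) (mv n RR y)" by (simp add: mv_herm[OF sdm_herm[OF Uc]])
  also have "\<dots> = ip n (cl C k) (mv n RR (mv n RR y))" by (rule ip_cong) (rule sdm_idem[OF U, symmetric])
  also have "\<dots> = ip n (rk k) (mv n RR y)" by (simp add: mv_herm[OF sdm_herm[OF Uc]])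
  finally show ?thesis .
qed

definition "rho k = (1 + lam k) / 2"
definition "wh k = (\<lambda>i. complex_of_real (1 / sqrt (rho k)) * rk k i)"

lemma wh_orth: assumes "k \<in> {k. k < n \<and> lam k > 0}" "l \<in> {k. k < n \<and> lam k > 0}"
  shows "ip n (wh k) (wh l) = (if k = l then 1 else 0)"
proof -
  have k: "k < n" "lam k > 0" and l: "l < n" "lam l > 0" using assms by auto
  have "ip n (wh k) (wh l) = complex_of_real (1 / sqrt (rho k)) * complex_of_real (1 / sqrt (rho l)) * Rp k l"
    unfolding wh_def ip_scale_left ip_scale_right ip_rk by simp
  also have "\<dots> = (if k = l then 1 else 0)"
  proof (cases "k = l")
    case True
    have rp: "rho k > 0" unfolding rho_def using k by simp
    have ss: "sqrt (rho k) * sqrt (rho k) = rho k" using rp by (simp add: real_sqrt_mult_self)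
    have "(1 / sqrt (rho k)) * (1 / sqrt (rho k)) * rho k = rho k / (sqrt (rho k) * sqrt (rho k))" by simp
    also have "\<dots> = 1" unfolding ss using rp by simp
    finally have "(1 / sqrt (rho k)) * (1 / sqrt (rho k)) * rho k = 1" .
    then have c1: "complex_of_real ((1 / sqrt (rho k)) * (1 / sqrt (rho k)) * rho k) = 1" by simp
    have "Rp k k = complex_of_real (rho k)" using diag_facts(2)[OF k] unfolding rho_def .
    then have "complex_of_real (1 / sqrt (rho k)) * complex_of_real (1 / sqrt (rho k)) * Rp k k = 1"
      using c1 by (simp only: of_real_mult)
    then show ?thesis using True by simp
  next
    case False
    then show ?thesis using offdiag[OF k(1) l(1) False k(2) l(2)] by simp
  qed
  finally show ?thesis .
qed

lemma nsq_wh: assumes "k < n" "lam k > 0" shows "nsq n (wh k) = 1"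
proof -
  have "complex_of_real (nsq n (wh k)) = 1" unfolding nsq_ip using wh_orth[of k k] assms by simp
  then show ?thesis by (metis of_real_1 of_real_eq_iff)
qed

lemma ip_u_wh: assumes j: "j < n"
  shows "ip n (cl U j) (wh k) = complex_of_real (1 / sqrt (rho k)) * (ind Ji j * ip n (cl U j) (cl C k))"
  unfolding wh_def ip_scale_right ip_col_sdm[OF U j] ..

lemma count_Kp: assumes Ji: "Ji \<subseteq> {..<n}"
  shows "card {k. k < n \<and> lam k > 0} \<le> card Ji"
proof -
  let ?Kp = "{k. k < n \<and> lam k > 0}"
  have fKp: "finite ?Kp" by simp
  have fJi: "finite Ji" using Ji finite_subset by blast
  have "real (card ?Kp) = (\<Sum>k\<in>?Kp. nsq n (wh k))" by (simp add: nsq_wh)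
  also have "\<dots> = (\<Sum>k\<in>?Kp. \<Sum>j<n. (cmod (ip n (cl U j) (wh k)))^2)"
    by (simp add: parseval[OF U])
  also have "\<dots> = (\<Sum>k\<in>?Kp. \<Sum>j\<in>Ji. (cmod (ip n (cl U j) (wh k)))^2)"
  proof (rule sum.cong[OF refl], rule sum.mono_neutral_right)
    fix k
    show "finite {..<n}" by simp
    show "Ji \<subseteq> {..<n}" by (rule Ji)
    show "\<forall>j\<in>{..<n} - Ji. (cmod (ip n (cl U j) (wh k)))^2 = 0"
      by (auto simp: ip_u_wh ind_def)
  qed
  also have "\<dots> = (\<Sum>j\<in>Ji. \<Sum>k\<in>?Kp. (cmod (ip n (wh k) (cl U j)))^2)"
    by (subst sum.swap) (simp add: ip_conj[symmetric, of n "cl U _"])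
  also have "\<dots> \<le> (\<Sum>j\<in>Ji. nsq n (cl U j))"
    by (rule sum_mono, rule bessel[OF fKp]) (rule wh_orth)
  also have "\<dots> = real (card Ji)"
    using Ji by (simp add: nsq_col[OF U] subset_iff)
  finally show ?thesis by simp
qed

lemma cmod_ip_swap: "cmod (ip n x y) = cmod (ip n y x)"
  by (metis complex_mod_cnj ip_conj)

lemma ip_w_rk: assumes l: "l < n" "l \<notin> K" and k: "k < n"
  shows "ip n (cl W l) (rk k) = lam k * ip n (cl W l) (cl C k)"
proof -
  have "ip n (cl W l) (rk k) = ip n (cl W l) (\<lambda>i. lam k * cl C k i + mv n FF (cl C k) i)"
    by (rule ip_cong) (metis E1[OF k] add_diff_cancel_left' diff_add_cancel)
  also have "\<dots> = lam k * ip n (cl W l) (cl C k) + ind K l * ip n (cl W l) (cl C k)"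
    unfolding ip_add_right ip_scale_right ip_col_sdm[OF W l(1)] ..
  finally show ?thesis using l(2) by (simp add: ind_def)
qed

lemma outside_mass: assumes k: "k < n" and pos: "lam k > 0" and K: "K \<subseteq> {..<n}"
  shows "(\<Sum>l\<in>{..<n} - K. (cmod (ip n (cl W l) (cl C k)))^2) = rho k"
proof -
  have tot: "(\<Sum>l<n. (cmod (ip n (cl W l) (cl C k)))^2) = 1"
    unfolding parseval[OF W] by (rule nsq_col[OF C k])
  have "(\<Sum>l<n. ind K l * (cmod (ip n (cl W l) (cl C k)))^2) = (\<Sum>l\<in>K. (cmod (ip n (cl W l) (cl C k)))^2)"
    by (rule sum.mono_neutral_cong_right) (use K in \<open>auto simp: ind_def\<close>)
  moreover have "complex_of_real (\<Sum>l<n. ind K l * (cmod (ip n (cl W l) (cl C k)))^2) = complex_of_real ((1 - lam k) / 2)"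
    using Fp_diag[of k] diag_facts(1)[OF k pos] by simp
  ultimately have inK: "(\<Sum>l\<in>K. (cmod (ip n (cl W l) (cl C k)))^2) = (1 - lam k) / 2"
    using of_real_eq_iff by metis
  have "(\<Sum>l<n. (cmod (ip n (cl W l) (cl C k)))^2) = (\<Sum>l\<in>K. (cmod (ip n (cl W l) (cl C k)))^2) + (\<Sum>l\<in>{..<n} - K. (cmod (ip n (cl W l) (cl C k)))^2)"
    using sum.subset_diff[OF K, of "\<lambda>l. (cmod (ip n (cl W l) (cl C k)))^2"] by simp
  then have "(\<Sum>l\<in>{..<n} - K. (cmod (ip n (cl W l) (cl C k)))^2) = (\<Sum>l<n. (cmod (ip n (cl W l) (cl C k)))^2) - (\<Sum>l\<in>K. (cmod (ip n (cl W l) (cl C k)))^2)"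
    by simp
  also have "\<dots> = 1 - (1 - lam k) / 2" unfolding tot inK ..
  finally show ?thesis unfolding rho_def by (simp add: field_simps)
qed

lemma lam2: assumes k: "k < n" and pos: "lam k > 0" and K: "K \<subseteq> {..<n}"
  shows "(lam k)^2 = (\<Sum>l\<in>{..<n} - K. (cmod (ip n (cl W l) (wh k)))^2)"
proof -
  have rp: "rho k > 0" unfolding rho_def using pos by simp
  have "(\<Sum>l\<in>{..<n} - K. (cmod (ip n (cl W l) (wh k)))^2)
      = (\<Sum>l\<in>{..<n} - K. (1 / rho k) * (lam k)^2 * (cmod (ip n (cl W l) (cl C k)))^2)"
  proof (rule sum.cong[OF refl])
    fix l assume "l \<in> {..<n} - K"
    then have l: "l < n" "l \<notin> K" by auto
    have "ip n (cl W l) (wh k) = complex_of_real (1 / sqrt (rho k)) * (lam k * ip n (cl W l) (cl C k))"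
      unfolding wh_def ip_scale_right ip_w_rk[OF l k] ..
    then have "cmod (ip n (cl W l) (wh k)) = (1 / sqrt (rho k)) * \<bar>lam k\<bar> * cmod (ip n (cl W l) (cl C k))"
      using rp by (simp add: norm_mult norm_divide)
    then show "(cmod (ip n (cl W l) (wh k)))^2 = (1 / rho k) * (lam k)^2 * (cmod (ip n (cl W l) (cl C k)))^2"
      using rp by (simp add: power_mult_distrib power_divide)
  qed
  also have "\<dots> = (1 / rho k) * (lam k)^2 * (\<Sum>l\<in>{..<n} - K. (cmod (ip n (cl W l) (cl C k)))^2)"
    by (rule sum_distrib_left[symmetric])
  also have "\<dots> = (1 / rho k) * (lam k)^2 * rho k"
    unfolding outside_mass[OF k pos K] ..
  also have "\<dots> = (lam k)^2" using rp by simp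
  finally show ?thesis by simp
qed

lemma lam2_sum: assumes Ji: "Ji \<subseteq> {..<n}" and K: "K \<subseteq> {..<n}"
  shows "(\<Sum>k\<in>{k. k < n \<and> lam k > 0}. (lam k)^2) \<le> (\<Sum>j\<in>Ji. \<Sum>l\<in>{..<n} - K. (cmod (ip n (cl W l) (cl U j)))^2)"
proof -
  let ?Kp = "{k. k < n \<and> lam k > 0}"
  let ?D = "{..<n} - K"
  have fKp: "finite ?Kp" by simp
  have "(\<Sum>k\<in>?Kp. (lam k)^2) = (\<Sum>k\<in>?Kp. \<Sum>l\<in>?D. (cmod (ip n (cl W l) (wh k)))^2)"
    by (rule sum.cong[OF refl]) (use lam2 K in auto)
  also have "\<dots> = (\<Sum>l\<in>?D. \<Sum>k\<in>?Kp. (cmod (ip n (wh k) (mv n RR (cl W l))))^2)"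
  proof (subst sum.swap, intro sum.cong refl)
    fix l k
    have "ip n (wh k) (cl W l) = ip n (wh k) (mv n RR (cl W l))"
      unfolding wh_def ip_scale_left by (simp add: ip_rk_proj[symmetric])
    then show "(cmod (ip n (cl W l) (wh k)))^2 = (cmod (ip n (wh k) (mv n RR (cl W l))))^2"
      by (metis cmod_ip_swap)
  qed
  also have "\<dots> \<le> (\<Sum>l\<in>?D. nsq n (mv n RR (cl W l)))"
    by (rule sum_mono, rule bessel[OF fKp]) (rule wh_orth)
  also have "\<dots> = (\<Sum>l\<in>?D. \<Sum>j\<in>Ji. (cmod (ip n (cl U j) (cl W l)))^2)"
  proof (rule sum.cong[OF refl])
    fix l
    have "nsq n (mv n RR (cl W l)) = (\<Sum>j<n. (cmod (ip n (cl U j) (mv n RR (cl W l))))^2)"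
      by (rule parseval[OF U, symmetric])
    also have "\<dots> = (\<Sum>j<n. ind Ji j * (cmod (ip n (cl U j) (cl W l)))^2)"
      by (intro sum.cong refl) (simp add: ip_col_sdm[OF U] norm_mult ind_def)
    also have "\<dots> = (\<Sum>j\<in>Ji. (cmod (ip n (cl U j) (cl W l)))^2)"
      by (rule sum.mono_neutral_cong_right) (use Ji in \<open>auto simp: ind_def\<close>)
    finally show "nsq n (mv n RR (cl W l)) = (\<Sum>j\<in>Ji. (cmod (ip n (cl U j) (cl W l)))^2)" .
  qed
  also have "\<dots> = (\<Sum>j\<in>Ji. \<Sum>l\<in>?D. (cmod (ip n (cl W l) (cl U j)))^2)"
    by (subst sum.swap) (simp add: cmod_ip_swap)
  finally show ?thesis .
qed

lemma L_ctx: assumes Z: "unitary_mat n Z" and Ji: "Ji \<subseteq> {..<n}" and K: "K \<subseteq> {..<n}"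
  and DK: "(\<Sum>j\<in>Ji. \<Sum>l\<in>{..<n} - K. (cmod (ip n (cl W l) (cl U j)))^2) \<le> real (card Ji) * \<delta>^2"
  and d0: "\<delta> \<ge> 0"
  shows "Re (tr n (sdm n Z (ind T) * sdm n C lam)) \<le> real (card Ji) * \<delta>"
proof -
  let ?Kp = "{k. k < n \<and> lam k > 0}"
  have Zc: "Z \<in> carrier_mat n n" using unitaryD[OF Z] by simp
  define p where "p k = (\<Sum>m<n. ind T m * (cmod (ip n (cl Z m) (cl C k)))^2)" for k
  have pk: "ip n (cl C k) (mv n (sdm n Z (ind T)) (cl C k)) = complex_of_real (p k)" for k
    unfolding p_def by (rule qf_cols[OF Z])
  have p01: "0 \<le> p k \<and> p k \<le> 1" if k: "k < n" for k
  proof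
    show "0 \<le> p k" unfolding p_def by (rule sum_nonneg) (simp add: ind_def)
    have "p k \<le> (\<Sum>m<n. (cmod (ip n (cl Z m) (cl C k)))^2)"
      unfolding p_def by (rule sum_mono) (simp add: ind_def)
    also have "\<dots> = 1" unfolding parseval[OF Z] by (rule nsq_col[OF C k])
    finally show "p k \<le> 1" .
  qed
  have "tr n (sdm n Z (ind T) * sdm n C lam) = (\<Sum>k<n. lam k * complex_of_real (p k))"
    unfolding tr_mult_sdm[OF sdm_carrier[OF Zc] Cc] pk ..
  then have "Re (tr n (sdm n Z (ind T) * sdm n C lam)) = (\<Sum>k<n. lam k * p k)" by simp
  also have "\<dots> \<le> (\<Sum>k<n. if lam k > 0 then lam k else 0)"
  proof (rule sum_mono)
    fix k assume "k \<in> {..<n}"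
    then have "0 \<le> p k" "p k \<le> 1" using p01 by auto
    then show "lam k * p k \<le> (if lam k > 0 then lam k else 0)"
      by (cases "lam k > 0") (auto simp: mult_le_cancel_left1 mult_nonpos_nonneg)
  qed
  also have "\<dots> = (\<Sum>k\<in>?Kp. lam k)"
  proof -
    have "?Kp = {k \<in> {..<n}. lam k > 0}" by auto
    then show ?thesis using sum.inter_filter[of "{..<n}" lam "\<lambda>k. lam k > 0"] by simp
  qed
  also have "\<dots> \<le> real (card Ji) * \<delta>"
  proof (rule power2_le_imp_le)
    have "(\<Sum>k\<in>?Kp. lam k)^2 \<le> real (card ?Kp) * (\<Sum>k\<in>?Kp. (lam k)^2)"
      by (rule cs_sum) simp
    also have "\<dots> \<le> real (card Ji) * (real (card Ji) * \<delta>^2)"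
    proof (rule mult_mono)
      show "real (card ?Kp) \<le> real (card Ji)" using count_Kp[OF Ji] by simp
      show "(\<Sum>k\<in>?Kp. (lam k)^2) \<le> real (card Ji) * \<delta>^2"
        using lam2_sum[OF Ji K] DK by linarith
    qed (auto intro: sum_nonneg)
    also have "\<dots> = (real (card Ji) * \<delta>)^2" by (simp add: power2_eq_square)
    finally show "(\<Sum>k\<in>?Kp. lam k)^2 \<le> (real (card Ji) * \<delta>)^2" .
    show "0 \<le> real (card Ji) * \<delta>" using d0 by simp
  qed
  finally show ?thesis .
qed

end

lemma adj_minus: fixes A B :: "complex mat" assumes "A \<in> carrier_mat n n" "B \<in> carrier_mat n n"
  shows "mat_adjoint (A - B) = mat_adjoint A - mat_adjoint B"
  by (rule eq_matI) (use assms in auto)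

lemma L_lemma: assumes U: "unitary_mat n U" and W: "unitary_mat n W" and Z: "unitary_mat n Z"
  and Ji: "Ji \<subseteq> {..<n}" and K: "K \<subseteq> {..<n}"
  and DK: "(\<Sum>j\<in>Ji. \<Sum>l\<in>{..<n} - K. (cmod (ip n (cl W l) (cl U j)))^2) \<le> real (card Ji) * \<delta>^2"
  and d0: "\<delta> \<ge> 0"
  shows "Re (tr n (sdm n Z (ind T) * (sdm n U (ind Ji) - sdm n W (ind K)))) \<le> real (card Ji) * \<delta>"
proof -
  have Uc: "U \<in> carrier_mat n n" and Wc: "W \<in> carrier_mat n n" using unitaryD U W by auto
  have "hermitian_mat n (sdm n U (ind Ji) - sdm n W (ind K))"
    unfolding hermitian_mat_def
  proof
    show "sdm n U (ind Ji) - sdm n W (ind K) \<in> carrier_mat n n" using Wc by (simp add: minus_carrier_mat)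
    show "mat_adjoint (sdm n U (ind Ji) - sdm n W (ind K)) = sdm n U (ind Ji) - sdm n W (ind K)"
      by (simp only: adj_minus[OF sdm_carrier[OF Uc] sdm_carrier[OF Wc]] adj_sdm[OF Uc] adj_sdm[OF Wc])
  qed
  then obtain C lam where C: "unitary_mat n C" and RF: "sdm n U (ind Ji) - sdm n W (ind K) = sdm n C lam"
    using spectral by blast
  show ?thesis unfolding RF by (rule L_ctx[OF U W C RF Z Ji K DK d0])
qed


lemma DK_frob:
  assumes U: "unitary_mat n U" and W: "unitary_mat n W"
    and Ji: "Ji = {j. j < n \<and> h j \<in> {E + \<epsilon>..E + \<Delta> - \<epsilon>}}"
    and K: "K = {l. l < n \<and> g l \<in> {E..E + \<Delta>}}"
    and eps: "\<epsilon> > 0"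
    and V: "\<And>j. j < n \<Longrightarrow> nsq n (\<lambda>i. mv n (sdm n U h) (cl U j) i - mv n (sdm n W g) (cl U j) i) \<le> vn^2"
  shows "(\<Sum>j\<in>Ji. \<Sum>l\<in>{..<n} - K. (cmod (ip n (cl W l) (cl U j)))^2) \<le> real (card Ji) * (vn / \<epsilon>)^2"
proof -
  have "(\<Sum>j\<in>Ji. \<Sum>l\<in>{..<n} - K. (cmod (ip n (cl W l) (cl U j)))^2) \<le> (\<Sum>j\<in>Ji. (vn / \<epsilon>)^2)"
  proof (rule sum_mono)
    fix j assume "j \<in> Ji"
    then have j: "j < n" and hj: "E + \<epsilon> \<le> h j" "h j \<le> E + \<Delta> - \<epsilon>" using Ji by auto
    let ?v = "\<lambda>i. mv n (sdm n U h) (cl U j) i - mv n (sdm n W g) (cl U j) i"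
    have key: "ip n (cl W l) ?v = complex_of_real (h j - g l) * ip n (cl W l) (cl U j)" if l: "l < n" for l
    proof -
      have "ip n (cl W l) ?v = ip n (cl W l) (mv n (sdm n U h) (cl U j)) - ip n (cl W l) (mv n (sdm n W g) (cl U j))"
        by (rule ip_diff_right)
      also have "ip n (cl W l) (mv n (sdm n U h) (cl U j)) = ip n (cl W l) (\<lambda>i. h j * cl U j i)"
        by (rule ip_cong) (rule mv_sdm_col[OF U j])
      also have "\<dots> = h j * ip n (cl W l) (cl U j)" by (rule ip_scale_right)
      also have "ip n (cl W l) (mv n (sdm n W g) (cl U j)) = g l * ip n (cl W l) (cl U j)"
        by (rule ip_col_sdm[OF W l])
      finally show ?thesis by (simp add: algebra_simps)
    qed
    have "(\<Sum>l\<in>{..<n} - K. (cmod (ip n (cl W l) (cl U j)))^2) \<le> (\<Sum>l\<in>{..<n} - K. (cmod (ip n (cl W l) ?v))^2 / \<epsilon>^2)"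
    proof (rule sum_mono)
      fix l assume "l \<in> {..<n} - K"
      then have l: "l < n" and gl: "g l < E \<or> g l > E + \<Delta>" using K by auto
      have gap: "\<epsilon> \<le> \<bar>h j - g l\<bar>" using gl hj by auto
      have "cmod (ip n (cl W l) ?v) = \<bar>h j - g l\<bar> * cmod (ip n (cl W l) (cl U j))"
        unfolding key[OF l] norm_mult norm_of_real ..
      then have "\<epsilon> * cmod (ip n (cl W l) (cl U j)) \<le> cmod (ip n (cl W l) ?v)"
        using gap by (simp add: mult_right_mono)
      then have "(\<epsilon> * cmod (ip n (cl W l) (cl U j)))^2 \<le> (cmod (ip n (cl W l) ?v))^2"
        using eps by (intro power_mono) auto
      then show "(cmod (ip n (cl W l) (cl U j)))^2 \<le> (cmod (ip n (cl W l) ?v))^2 / \<epsilon>^2"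
        using eps by (simp add: field_simps power_mult_distrib)
    qed
    also have "\<dots> \<le> (\<Sum>l<n. (cmod (ip n (cl W l) ?v))^2 / \<epsilon>^2)"
      by (rule sum_mono2) auto
    also have "\<dots> = nsq n ?v / \<epsilon>^2" unfolding sum_divide_distrib[symmetric] parseval[OF W] ..
    also have "\<dots> \<le> vn^2 / \<epsilon>^2" using V[OF j] eps by (simp add: divide_right_mono)
    also have "\<dots> = (vn / \<epsilon>)^2" by (simp add: power_divide)
    finally show "(\<Sum>l\<in>{..<n} - K. (cmod (ip n (cl W l) (cl U j)))^2) \<le> (vn / \<epsilon>)^2" .
  qed
  also have "\<dots> = real (card Ji) * (vn / \<epsilon>)^2" by simp
  finally show ?thesis .
qed

definition pz :: "nat \<Rightarrow> complex mat \<Rightarrow> nat set \<Rightarrow> (nat \<Rightarrow> complex) \<Rightarrow> real" where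
  "pz n Z T u = (\<Sum>m<n. ind T m * (cmod (ip n (cl Z m) u))^2)"

lemma pz_bounds: assumes Z: "unitary_mat n Z" shows "0 \<le> pz n Z T u" "pz n Z T u \<le> nsq n u"
proof -
  show "0 \<le> pz n Z T u" unfolding pz_def by (rule sum_nonneg) (simp add: ind_def)
  have "pz n Z T u \<le> (\<Sum>m<n. (cmod (ip n (cl Z m) u))^2)"
    unfolding pz_def by (rule sum_mono) (simp add: ind_def)
  also have "\<dots> = nsq n u" by (rule parseval[OF Z])
  finally show "pz n Z T u \<le> nsq n u" .
qed

lemma pz_compl: assumes Z: "unitary_mat n Z"
  shows "pz n Z ({..<n} - T) u = nsq n u - pz n Z T u"
proof -
  have "pz n Z ({..<n} - T) u + pz n Z T u = (\<Sum>m<n. (cmod (ip n (cl Z m) u))^2)"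
    unfolding pz_def sum.distrib[symmetric] by (rule sum.cong[OF refl]) (auto simp: ind_def)
  then show ?thesis using parseval[OF Z] by simp
qed

lemma trace_ind: assumes Z: "unitary_mat n Z" and U: "unitary_mat n U" and S: "S \<subseteq> {..<n}"
  shows "tr n (sdm n Z (ind T) * sdm n U (ind S)) = complex_of_real (\<Sum>k\<in>S. pz n Z T (cl U k))"
proof -
  have Zc: "Z \<in> carrier_mat n n" and Uc: "U \<in> carrier_mat n n" using Z U unitaryD by auto
  have pzq: "ip n u (mv n (sdm n Z (ind T)) u) = complex_of_real (pz n Z T u)" for u
    unfolding pz_def qf_sdm[OF Zc] of_real_sum
    by (rule sum.cong[OF refl]) (simp only: of_real_mult cns mult.commute)
  have "tr n (sdm n Z (ind T) * sdm n U (ind S)) = (\<Sum>k<n. ind S k * complex_of_real (pz n Z T (cl U k)))"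
    unfolding tr_mult_sdm[OF sdm_carrier[OF Zc] Uc] pzq ..
  also have "\<dots> = complex_of_real (\<Sum>k<n. ind S k * pz n Z T (cl U k))" by simp
  also have "(\<Sum>k<n. ind S k * pz n Z T (cl U k)) = (\<Sum>k\<in>S. pz n Z T (cl U k))"
    by (rule sum.mono_neutral_cong_right) (use S in \<open>auto simp: ind_def\<close>)
  finally show ?thesis .
qed

lemma tr_minus: assumes "A \<in> carrier_mat n n" "B \<in> carrier_mat n n"
  shows "tr n (A - B) = tr n A - tr n B"
  unfolding tr_def using assms by (simp add: sum_subtractf)

lemma A_lemma:
  assumes U: "unitary_mat n U" and W: "unitary_mat n W" and Z: "unitary_mat n Z"
    and Ji: "Ji = {j. j < n \<and> h j \<in> {E + \<epsilon>..E + \<Delta> - \<epsilon>}}"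
    and J: "J = {j. j < n \<and> h j \<in> {E..E + \<Delta>}}"
    and K: "K = {l. l < n \<and> g l \<in> {E..E + \<Delta>}}"
    and eps: "\<epsilon> > 0" and vn: "vn \<ge> 0"
    and V: "\<And>j. j < n \<Longrightarrow> nsq n (\<lambda>i. mv n (sdm n U h) (cl U j) i - mv n (sdm n W g) (cl U j) i) \<le> vn^2"
  shows "(\<Sum>k\<in>J. pz n Z T (cl U k)) - (\<Sum>k\<in>K. pz n Z T (cl W k)) \<le> real (card Ji) * (vn / \<epsilon>) + real (card (J - Ji))"
proof -
  have Uc: "U \<in> carrier_mat n n" and Wc: "W \<in> carrier_mat n n" and Zc: "Z \<in> carrier_mat n n"
    using U W Z unitaryD by auto
  have JiJ: "Ji \<subseteq> J" using Ji J eps by auto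
  have Jn: "J \<subseteq> {..<n}" and Jin: "Ji \<subseteq> {..<n}" and Kn: "K \<subseteq> {..<n}" using J Ji K by auto
  have fJ: "finite J" using Jn finite_subset by blast
  have DK: "(\<Sum>j\<in>Ji. \<Sum>l\<in>{..<n} - K. (cmod (ip n (cl W l) (cl U j)))^2) \<le> real (card Ji) * (vn / \<epsilon>)^2"
    by (rule DK_frob[OF U W Ji K eps V])
  have L: "Re (tr n (sdm n Z (ind T) * (sdm n U (ind Ji) - sdm n W (ind K)))) \<le> real (card Ji) * (vn / \<epsilon>)"
    by (rule L_lemma[OF U W Z Jin Kn DK]) (use eps vn in simp)
  have "tr n (sdm n Z (ind T) * (sdm n U (ind Ji) - sdm n W (ind K)))
      = tr n (sdm n Z (ind T) * sdm n U (ind Ji)) - tr n (sdm n Z (ind T) * sdm n W (ind K))"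
    by (subst mult_minus_distrib_mat[of _ n n]) (use Uc Wc Zc in \<open>auto intro!: tr_minus\<close>)
  also have "\<dots> = complex_of_real ((\<Sum>k\<in>Ji. pz n Z T (cl U k)) - (\<Sum>k\<in>K. pz n Z T (cl W k)))"
    unfolding trace_ind[OF Z U Jin] trace_ind[OF Z W Kn] by simp
  finally have L2: "(\<Sum>k\<in>Ji. pz n Z T (cl U k)) - (\<Sum>k\<in>K. pz n Z T (cl W k)) \<le> real (card Ji) * (vn / \<epsilon>)"
    using L by simp
  have "(\<Sum>k\<in>J. pz n Z T (cl U k)) = (\<Sum>k\<in>Ji. pz n Z T (cl U k)) + (\<Sum>k\<in>J - Ji. pz n Z T (cl U k))"
    using sum.subset_diff[OF JiJ fJ, of "\<lambda>k. pz n Z T (cl U k)"] by (simp add: add.commute)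
  moreover have "(\<Sum>k\<in>J - Ji. pz n Z T (cl U k)) \<le> (\<Sum>k\<in>J - Ji. 1)"
  proof (rule sum_mono)
    fix k assume "k \<in> J - Ji"
    then have k: "k < n" using Jn by auto
    show "pz n Z T (cl U k) \<le> 1" using pz_bounds(2)[OF Z, of T "cl U k"] nsq_col[OF U k] by simp
  qed
  ultimately show ?thesis using L2 by simp
qed

lemma sum_sq_le_sq_sum: fixes a :: "nat \<Rightarrow> real" assumes "\<And>i. i \<in> A \<Longrightarrow> a i \<ge> 0" "finite A"
  shows "(\<Sum>i\<in>A. (a i)^2) \<le> (\<Sum>i\<in>A. a i)^2"
  using assms(2,1)
proof (induction A rule: finite_induct)
  case (insert x F)
  have "(\<Sum>i\<in>insert x F. (a i)^2) = (a x)^2 + (\<Sum>i\<in>F. (a i)^2)" using insert by simp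
  also have "\<dots> \<le> (a x)^2 + (\<Sum>i\<in>F. a i)^2" using insert by simp
  also have "\<dots> \<le> (a x + (\<Sum>i\<in>F. a i))^2"
  proof -
    have "0 \<le> a x * (\<Sum>i\<in>F. a i)" using insert by (simp add: sum_nonneg)
    then show ?thesis by (simp add: power2_eq_square algebra_simps)
  qed
  also have "\<dots> = (\<Sum>i\<in>insert x F. a i)^2" using insert by simp
  finally show ?case .
qed simp

lemma vec_norm2_le_l1: "vec_norm2 w \<le> (\<Sum>i<dim_vec w. cmod (w $ i))"
proof -
  have "(\<Sum>i<dim_vec w. (cmod (w $ i))^2) \<le> (\<Sum>i<dim_vec w. cmod (w $ i))^2"
    by (rule sum_sq_le_sq_sum) auto
  then have "sqrt (\<Sum>i<dim_vec w. (cmod (w $ i))^2) \<le> sqrt ((\<Sum>i<dim_vec w. cmod (w $ i))^2)"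
    by (rule real_sqrt_le_mono)
  also have "\<dots> = (\<Sum>i<dim_vec w. cmod (w $ i))" by (simp add: sum_nonneg)
  finally show ?thesis unfolding vec_norm2_def .
qed

lemma entry_le_vec_norm2: "k < dim_vec v \<Longrightarrow> cmod (v $ k) \<le> vec_norm2 v"
proof -
  assume k: "k < dim_vec v"
  have "(cmod (v $ k))^2 \<le> (\<Sum>i<dim_vec v. (cmod (v $ i))^2)"
    by (rule member_le_sum) (use k in auto)
  then have "sqrt ((cmod (v $ k))^2) \<le> sqrt (\<Sum>i<dim_vec v. (cmod (v $ i))^2)"
    by (rule real_sqrt_le_mono)
  then show ?thesis unfolding vec_norm2_def by simp
qed

lemma op_norm_bdd: "bdd_above {vec_norm2 (A *\<^sub>v v) | v. v \<in> carrier_vec (dim_col A) \<and> vec_norm2 v \<le> 1}"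
proof (rule bdd_aboveI, clarify)
  fix v :: "complex vec" assume v: "v \<in> carrier_vec (dim_col A)" "vec_norm2 v \<le> 1"
  have "vec_norm2 (A *\<^sub>v v) \<le> (\<Sum>i<dim_row A. cmod ((A *\<^sub>v v) $ i))"
    using vec_norm2_le_l1[of "A *\<^sub>v v"] by simp
  also have "\<dots> \<le> (\<Sum>i<dim_row A. \<Sum>k<dim_col A. cmod (A $$ (i,k)))"
  proof (rule sum_mono)
    fix i assume "i \<in> {..<dim_row A}"
    then have i: "i < dim_row A" by simp
    have "(A *\<^sub>v v) $ i = (\<Sum>k<dim_col A. A $$ (i,k) * v $ k)"
      using i v by (simp add: index_mult_mat_vec scalar_prod_def lessThan_atLeast0)
    then have "cmod ((A *\<^sub>v v) $ i) \<le> (\<Sum>k<dim_col A. cmod (A $$ (i,k) * v $ k))"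
      by (simp add: norm_sum)
    also have "\<dots> \<le> (\<Sum>k<dim_col A. cmod (A $$ (i,k)))"
    proof (rule sum_mono)
      fix k assume "k \<in> {..<dim_col A}"
      then have "cmod (v $ k) \<le> 1" using entry_le_vec_norm2[of k v] v by auto
      then show "cmod (A $$ (i,k) * v $ k) \<le> cmod (A $$ (i,k))"
        by (simp add: norm_mult mult_left_le)
    qed
    finally show "cmod ((A *\<^sub>v v) $ i) \<le> (\<Sum>k<dim_col A. cmod (A $$ (i,k)))" .
  qed
  finally show "vec_norm2 (A *\<^sub>v v) \<le> (\<Sum>i<dim_row A. \<Sum>k<dim_col A. cmod (A $$ (i,k)))" .
qed

lemma opnorm_col: assumes V: "V \<in> carrier_mat n n" and U: "unitary_mat n U" and j: "j < n"
  shows "nsq n (mv n V (cl U j)) \<le> (op_norm V)^2"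
proof -
  have Uc: "U \<in> carrier_mat n n" using unitaryD[OF U] by simp
  let ?v = "col U j"
  have vc: "?v \<in> carrier_vec (dim_col V)" using V Uc by auto
  have "vec_norm2 ?v = sqrt (nsq n (cl U j))"
    unfolding vec_norm2_def nsq_def cl_def using Uc j by simp
  then have v1: "vec_norm2 ?v \<le> 1" using nsq_col[OF U j] by simp
  have "vec_norm2 (V *\<^sub>v ?v) = sqrt (nsq n (mv n V (cl U j)))"
    unfolding vec_norm2_def nsq_def mv_def cl_def using V Uc j
    by (simp add: index_mult_mat_vec scalar_prod_def lessThan_atLeast0)
  moreover have "vec_norm2 (V *\<^sub>v ?v) \<le> op_norm V"
    unfolding op_norm_def by (rule cSup_upper) (use vc v1 op_norm_bdd in auto)
  ultimately have s: "sqrt (nsq n (mv n V (cl U j))) \<le> op_norm V" by simp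
  have "nsq n (mv n V (cl U j)) = (sqrt (nsq n (mv n V (cl U j))))^2" by (rule real_sqrt_pow2[symmetric], rule nsq_nonneg)
  also have "\<dots> \<le> (op_norm V)^2" by (rule power_mono[OF s]) (simp add: nsq_nonneg)
  finally show ?thesis .
qed

lemma arith_final:
  fixes p q pi qi a b tG tF \<delta> :: real
  assumes p: "p \<ge> 1" and q: "q \<ge> 1" and pi: "pi \<le> p" and qi: "qi \<le> q" and d: "\<delta> \<ge> 0"
    and tF: "tF \<ge> 0" and tG: "tG \<le> p"
    and D1: "tG - tF \<le> pi * \<delta> + a"
    and D2: "(q - tF) - (p - tG) \<le> qi * \<delta> + b"
  shows "tG / p - tF / q \<le> \<delta> + (\<bar>p - q\<bar> + a + b) / (2 * max p q)"
proof (cases "q \<le> p")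
  case True
  have m: "max p q = p" using True by simp
  have "tF / p \<le> tF / q" using tF q True by (simp add: frac_le)
  then have "tG / p - tF / q \<le> (tG - tF) / p" by (simp add: diff_divide_distrib)
  also have "tG - tF \<le> ((pi * \<delta> + a) + (qi * \<delta> + b + p - q)) / 2" using D1 D2 by simp
  also have "\<dots> \<le> (2 * p * \<delta> + a + b + (p - q)) / 2"
  proof -
    have "pi * \<delta> \<le> p * \<delta>" using pi d by (simp add: mult_right_mono)
    moreover have "qi * \<delta> \<le> p * \<delta>" using qi True d by (simp add: mult_right_mono)
    ultimately show ?thesis by simp
  qed
  finally have "tG / p - tF / q \<le> ((2 * p * \<delta> + a + b + (p - q)) / 2) / p" using p by (simp add: divide_right_mono)
  also have "\<dots> = \<delta> + (\<bar>p - q\<bar> + a + b) / (2 * max p q)" using p True m by (simp add: field_simps)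
  finally show ?thesis .
next
  case False
  have m: "max p q = q" using False by simp
  have e: "tG / p - tF / q = (q - tF) / q - (p - tG) / p" using p q by (simp add: field_simps)
  have "(p - tG) / q \<le> (p - tG) / p" using tG p False by (simp add: frac_le)
  then have "tG / p - tF / q \<le> ((q - tF) - (p - tG)) / q" unfolding e by (simp add: diff_divide_distrib)
  also have "(q - tF) - (p - tG) \<le> ((q - p + pi * \<delta> + a) + (qi * \<delta> + b)) / 2" using D1 D2 by simp
  also have "\<dots> \<le> (2 * q * \<delta> + a + b + (q - p)) / 2"
  proof -
    have "pi * \<delta> \<le> q * \<delta>" using pi False d by (simp add: mult_right_mono)
    moreover have "qi * \<delta> \<le> q * \<delta>" using qi d by (simp add: mult_right_mono)
    ultimately show ?thesis by simp
  qed
  finally have "tG / p - tF / q \<le> ((2 * q * \<delta> + a + b + (q - p)) / 2) / q" using q by (simp add: divide_right_mono)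
  also have "\<dots> = \<delta> + (\<bar>p - q\<bar> + a + b) / (2 * max p q)" using q False m by (simp add: field_simps)
  finally show ?thesis .
qed


lemma pz_qf: assumes Z: "unitary_mat n Z"
  shows "ip n u (mv n (sdm n Z (ind T)) u) = complex_of_real (pz n Z T u)"
proof -
  have Zc: "Z \<in> carrier_mat n n" using unitaryD[OF Z] by simp
  show ?thesis unfolding pz_def qf_sdm[OF Zc] of_real_sum
    by (rule sum.cong[OF refl]) (simp only: of_real_mult cns mult.commute)
qed

lemma trace_gen: assumes Z: "unitary_mat n Z" and U: "unitary_mat n U"
  shows "tr n (sdm n Z (ind T) * sdm n U d) = complex_of_real (\<Sum>k<n. d k * pz n Z T (cl U k))"
proof -
  have Zc: "Z \<in> carrier_mat n n" and Uc: "U \<in> carrier_mat n n" using Z U unitaryD by auto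
  show ?thesis unfolding tr_mult_sdm[OF sdm_carrier[OF Zc] Uc] pz_qf[OF Z] by simp
qed

lemma sum_ind_div: assumes "S \<subseteq> {..<n}"
  shows "(\<Sum>k<n. ind S k / c * f k) = (\<Sum>k\<in>S. f k) / (c::real)"
proof -
  have "(\<Sum>k<n. ind S k / c * f k) = (\<Sum>k\<in>S. f k / c)"
    by (rule sum.mono_neutral_cong_right) (use assms in \<open>auto simp: ind_def\<close>)
  then show ?thesis by (simp add: sum_divide_distrib)
qed

lemma smult_sdm: assumes "U \<in> carrier_mat n n"
  shows "complex_of_real c \<cdot>\<^sub>m sdm n U d = sdm n U (\<lambda>i. c * d i)"
proof (rule eq_matI)
  fix i j assume "i < dim_row (sdm n U (\<lambda>i. c * d i))" "j < dim_col (sdm n U (\<lambda>i. c * d i))"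
  then have i: "i < n" and j: "j < n" using assms by auto
  show "(complex_of_real c \<cdot>\<^sub>m sdm n U d) $$ (i,j) = sdm n U (\<lambda>i. c * d i) $$ (i,j)"
    using i j assms by (simp add: sdm_index sum_distrib_left mult_ac)
qed (use assms in auto)

lemma op_norm_nonneg: "op_norm A \<ge> 0"
proof -
  have z: "vec_norm2 (0\<^sub>v (dim_col A) :: complex vec) \<le> 1" by (simp add: vec_norm2_def)
  have mem: "vec_norm2 (A *\<^sub>v 0\<^sub>v (dim_col A)) \<in> {vec_norm2 (A *\<^sub>v v) | v. v \<in> carrier_vec (dim_col A) \<and> vec_norm2 v \<le> 1}"
    unfolding mem_Collect_eq by (rule exI[of _ "0\<^sub>v (dim_col A)"]) (use z in simp)
  have "vec_norm2 (A *\<^sub>v 0\<^sub>v (dim_col A)) \<le> op_norm A"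
    unfolding op_norm_def by (rule cSup_upper[OF mem op_norm_bdd])
  moreover have "vec_norm2 (A *\<^sub>v 0\<^sub>v (dim_col A)) \<ge> 0" unfolding vec_norm2_def by simp
  ultimately show ?thesis by linarith
qed

lemma part2:
  fixes n :: nat and U W V :: "complex mat" and h g :: "nat \<Rightarrow> real"
  assumes U: "unitary_mat n U" and W: "unitary_mat n W" and Vc: "V \<in> carrier_mat n n"
    and HV: "sdm n U h = sdm n W g + V"
    and eps: "0 < \<epsilon>" "\<epsilon> < \<Delta> / 2"
    and J: "J = {j. j < n \<and> h j \<in> {E..E + \<Delta>}}" and K: "K = {l. l < n \<and> g l \<in> {E..E + \<Delta>}}"
    and p1: "card J \<ge> 1" and q1: "card K \<ge> 1"
    and B: "B = {E..<E + \<epsilon>} \<union> {E + \<Delta> - \<epsilon><..E + \<Delta>}"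
  shows "trace_norm (sdm n U (\<lambda>i. ind J i / real (card J)) - sdm n W (\<lambda>i. ind K i / real (card K))) / 2
     \<le> op_norm V / \<epsilon> + (\<bar>real (card J) - real (card K)\<bar> + real (card {i. i < n \<and> h i \<in> B}) + real (card {i. i < n \<and> g i \<in> B}))
          / (2 * max (real (card J)) (real (card K)))"
proof -
  have Uc: "U \<in> carrier_mat n n" and Wc: "W \<in> carrier_mat n n" using U W unitaryD by auto
  define p where "p = real (card J)"
  define q where "q = real (card K)"
  define X where "X = sdm n U (\<lambda>i. ind J i / p) - sdm n W (\<lambda>i. ind K i / q)"
  define Ji where "Ji = {j. j < n \<and> h j \<in> {E + \<epsilon>..E + \<Delta> - \<epsilon>}}"
  define Ki where "Ki = {j. j < n \<and> g j \<in> {E + \<epsilon>..E + \<Delta> - \<epsilon>}}"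
  have Jn: "J \<subseteq> {..<n}" and Kn: "K \<subseteq> {..<n}" using J K by auto
  have fJ: "finite J" and fK: "finite K" using Jn Kn finite_subset by auto
  have pp: "p \<ge> 1" and qp: "q \<ge> 1" using p1 q1 unfolding p_def q_def by auto
  have JB: "J - Ji = {i. i < n \<and> h i \<in> B}" unfolding J Ji_def B using eps by auto
  have KB: "K - Ki = {i. i < n \<and> g i \<in> B}" unfolding K Ki_def B using eps by auto
  have JiJ: "Ji \<subseteq> J" and KiK: "Ki \<subseteq> K" unfolding Ji_def Ki_def J K using eps by auto
  have vn: "op_norm V \<ge> 0" by (rule op_norm_nonneg)
  have mvH: "mv n (sdm n U h) x i - mv n (sdm n W g) x i = mv n V x i" if "i < n" for x i
    unfolding HV mv_def using that Vc Wc by (simp add: sum.distrib distrib_right)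
  have V1: "nsq n (\<lambda>i. mv n (sdm n U h) (cl U j) i - mv n (sdm n W g) (cl U j) i) \<le> (op_norm V)^2" if "j < n" for j
  proof -
    have "nsq n (\<lambda>i. mv n (sdm n U h) (cl U j) i - mv n (sdm n W g) (cl U j) i) = nsq n (mv n V (cl U j))"
      unfolding nsq_def by (rule sum.cong[OF refl]) (simp add: mvH)
    then show ?thesis using opnorm_col[OF Vc U that] by simp
  qed
  have V2: "nsq n (\<lambda>i. mv n (sdm n W g) (cl W j) i - mv n (sdm n U h) (cl W j) i) \<le> (op_norm V)^2" if "j < n" for j
  proof -
    have "nsq n (\<lambda>i. mv n (sdm n W g) (cl W j) i - mv n (sdm n U h) (cl W j) i) = nsq n (mv n V (cl W j))"
      unfolding nsq_def
    proof (rule sum.cong[OF refl])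
      fix i assume "i \<in> {..<n}"
      then have "mv n (sdm n W g) (cl W j) i - mv n (sdm n U h) (cl W j) i = - mv n V (cl W j) i"
        using mvH[of i "cl W j"] by (simp add: algebra_simps)
      then show "(cmod (mv n (sdm n W g) (cl W j) i - mv n (sdm n U h) (cl W j) i))^2 = (cmod (mv n V (cl W j) i))^2"
        by simp
    qed
    then show ?thesis using opnorm_col[OF Vc W that] by simp
  qed
  have Xh: "hermitian_mat n X"
    unfolding hermitian_mat_def X_def
  proof
    show "sdm n U (\<lambda>i. ind J i / p) - sdm n W (\<lambda>i. ind K i / q) \<in> carrier_mat n n" using Wc by (simp add: minus_carrier_mat)
    show "mat_adjoint (sdm n U (\<lambda>i. ind J i / p) - sdm n W (\<lambda>i. ind K i / q)) = sdm n U (\<lambda>i. ind J i / p) - sdm n W (\<lambda>i. ind K i / q)"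
      by (simp only: adj_minus[OF sdm_carrier[OF Uc] sdm_carrier[OF Wc]] adj_sdm[OF Uc] adj_sdm[OF Wc])
  qed
  obtain Z x where Z: "unitary_mat n Z" and Xe: "X = sdm n Z x" using spectral[OF Xh] by blast
  have Zc: "Z \<in> carrier_mat n n" using unitaryD[OF Z] by simp
  define T where "T = {k. k < n \<and> x k > 0}"
  define T' where "T' = {..<n} - T"
  define tG where "tG = (\<Sum>k\<in>J. pz n Z T (cl U k))"
  define tF where "tF = (\<Sum>k\<in>K. pz n Z T (cl W k))"
  have trX: "tr n X = complex_of_real (\<Sum>k<n. x k)" unfolding Xe tr_sdm_self[OF Z] by simp
  have "tr n X = tr n (sdm n U (\<lambda>i. ind J i / p)) - tr n (sdm n W (\<lambda>i. ind K i / q))"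
    unfolding X_def by (rule tr_minus) (use Uc Wc in auto)
  also have "\<dots> = complex_of_real ((\<Sum>k<n. ind J k / p) - (\<Sum>k<n. ind K k / q))"
    unfolding tr_sdm_self[OF U] tr_sdm_self[OF W] by simp
  also have "(\<Sum>k<n. ind J k / p) = (\<Sum>k<n. ind J k / p * 1)" by simp
  also have "\<dots> = real (card J) / p" unfolding sum_ind_div[OF Jn] by simp
  also have "(\<Sum>k<n. ind K k / q) = (\<Sum>k<n. ind K k / q * 1)" by simp
  also have "\<dots> = real (card K) / q" unfolding sum_ind_div[OF Kn] by simp
  finally have c1: "tr n X = complex_of_real (real (card J) / p - real (card K) / q)" .
  have "(\<Sum>k<n. x k) = real (card J) / p - real (card K) / q" using c1 unfolding trX of_real_eq_iff .
  then have sumx: "(\<Sum>k<n. x k) = 0" using pp qp unfolding p_def q_def by simp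
  have t1: "tr n (sdm n Z (ind T) * X) = complex_of_real (\<Sum>k<n. x k * ind T k)"
  proof -
    have "tr n (sdm n Z (ind T) * X) = (\<Sum>k<n. x k * ip n (cl Z k) (mv n (sdm n Z (ind T)) (cl Z k)))"
      unfolding Xe by (rule tr_mult_sdm[OF sdm_carrier[OF Zc] Zc])
    also have "\<dots> = (\<Sum>k<n. complex_of_real (x k * ind T k))"
      by (intro sum.cong refl) (simp add: ip_sdm_cols[OF Z])
    finally show ?thesis by simp
  qed
  have t2: "tr n (sdm n Z (ind T) * X) = complex_of_real (tG / p - tF / q)"
  proof -
    have "tr n (sdm n Z (ind T) * X) = tr n (sdm n Z (ind T) * sdm n U (\<lambda>i. ind J i / p)) - tr n (sdm n Z (ind T) * sdm n W (\<lambda>i. ind K i / q))"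
      unfolding X_def by (subst mult_minus_distrib_mat[of _ n n]) (use Uc Wc Zc in \<open>auto intro!: tr_minus\<close>)
    also have "\<dots> = complex_of_real ((\<Sum>k<n. ind J k / p * pz n Z T (cl U k)) - (\<Sum>k<n. ind K k / q * pz n Z T (cl W k)))"
      unfolding trace_gen[OF Z U] trace_gen[OF Z W] by simp
    also have "\<dots> = complex_of_real (tG / p - tF / q)"
      unfolding sum_ind_div[OF Jn] sum_ind_div[OF Kn] tG_def tF_def ..
    finally show ?thesis .
  qed
  have sumT: "(\<Sum>k<n. x k * ind T k) = tG / p - tF / q" using t1 t2 of_real_eq_iff by metis
  have tn: "trace_norm X / 2 = tG / p - tF / q"
  proof -
    have "(\<Sum>k<n. \<bar>x k\<bar>) = (\<Sum>k<n. 2 * (x k * ind T k) - x k)"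
      by (intro sum.cong refl) (auto simp: ind_def T_def)
    also have "\<dots> = 2 * (tG / p - tF / q)" unfolding sum_subtractf sum_distrib_left[symmetric] sumT sumx by simp
    finally have S: "(\<Sum>k<n. \<bar>x k\<bar>) = 2 * (tG / p - tF / q)" .
    show ?thesis unfolding Xe trace_norm_sdm[OF Z] S by (simp add: mult.commute)
  qed
  have A1: "tG - tF \<le> real (card Ji) * (op_norm V / \<epsilon>) + real (card (J - Ji))"
    unfolding tG_def tF_def by (rule A_lemma[OF U W Z Ji_def J K eps(1) vn V1])
  have A2: "(\<Sum>k\<in>K. pz n Z T' (cl W k)) - (\<Sum>k\<in>J. pz n Z T' (cl U k)) \<le> real (card Ki) * (op_norm V / \<epsilon>) + real (card (K - Ki))"
    by (rule A_lemma[OF W U Z Ki_def K J eps(1) vn V2])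
  have cG: "(\<Sum>k\<in>J. pz n Z T' (cl U k)) = p - tG"
  proof -
    have "(\<Sum>k\<in>J. pz n Z T' (cl U k)) = (\<Sum>k\<in>J. 1 - pz n Z T (cl U k))"
      by (rule sum.cong[OF refl]) (use Jn in \<open>auto simp: T'_def pz_compl[OF Z] nsq_col[OF U]\<close>)
    then show ?thesis unfolding tG_def p_def by (simp add: sum_subtractf)
  qed
  have cF: "(\<Sum>k\<in>K. pz n Z T' (cl W k)) = q - tF"
  proof -
    have "(\<Sum>k\<in>K. pz n Z T' (cl W k)) = (\<Sum>k\<in>K. 1 - pz n Z T (cl W k))"
      by (rule sum.cong[OF refl]) (use Kn in \<open>auto simp: T'_def pz_compl[OF Z] nsq_col[OF W]\<close>)
    then show ?thesis unfolding tF_def q_def by (simp add: sum_subtractf)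
  qed
  have tF0: "tF \<ge> 0" unfolding tF_def by (rule sum_nonneg) (rule pz_bounds(1)[OF Z])
  have tGp: "tG \<le> p"
  proof -
    have "tG \<le> (\<Sum>k\<in>J. 1)" unfolding tG_def
    proof (rule sum_mono)
      fix k assume "k \<in> J"
      then have "k < n" using Jn by auto
      then show "pz n Z T (cl U k) \<le> 1" using pz_bounds(2)[OF Z, of T "cl U k"] nsq_col[OF U] by simp
    qed
    then show ?thesis unfolding p_def by simp
  qed
  have cJi: "real (card Ji) \<le> p" unfolding p_def using card_mono[OF fJ JiJ] by simp
  have cKi: "real (card Ki) \<le> q" unfolding q_def using card_mono[OF fK KiK] by simp
  have d0: "op_norm V / \<epsilon> \<ge> 0" using vn eps by simp
  have fin: "tG / p - tF / q \<le> op_norm V / \<epsilon> + (\<bar>p - q\<bar> + real (card (J - Ji)) + real (card (K - Ki))) / (2 * max p q)"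
    by (rule arith_final[OF pp qp cJi cKi d0 tF0 tGp A1]) (use A2 cG cF in simp)
  show ?thesis using fin tn unfolding X_def JB KB p_def q_def by linarith
qed


lemma pt_minus: assumes "A \<in> carrier_mat (dS*dB) (dS*dB)" "B \<in> carrier_mat (dS*dB) (dS*dB)"
  shows "partial_trace_B dS dB A - partial_trace_B dS dB B = partial_trace_B dS dB (A - B)"
proof (rule eq_matI)
  fix i j assume "i < dim_row (partial_trace_B dS dB (A - B))" "j < dim_col (partial_trace_B dS dB (A - B))"
  then have i: "i < dS" and j: "j < dS" by (auto simp: partial_trace_B_def)
  have "(partial_trace_B dS dB A - partial_trace_B dS dB B) $$ (i,j) = partial_trace_B dS dB A $$ (i,j) - partial_trace_B dS dB B $$ (i,j)"
    using i j by (simp add: partial_trace_B_def)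
  also have "\<dots> = (\<Sum>a<dB. A $$ (i*dB + a, j*dB + a) - B $$ (i*dB + a, j*dB + a))"
    using i j by (simp add: pt_index sum_subtractf)
  also have "\<dots> = partial_trace_B dS dB (A - B) $$ (i,j)"
    unfolding pt_index[OF i j]
  proof (rule sum.cong[OF refl])
    fix a assume "a \<in> {..<dB}"
    then have a: "a < dB" by simp
    show "A $$ (i*dB + a, j*dB + a) - B $$ (i*dB + a, j*dB + a) = (A - B) $$ (i*dB + a, j*dB + a)"
      using idx_lt[OF i a] idx_lt[OF j a] assms by simp
  qed
  finally show "(partial_trace_B dS dB A - partial_trace_B dS dB B) $$ (i,j) = partial_trace_B dS dB (A - B) $$ (i,j)" .
qed (auto simp: partial_trace_B_def)

lemma max_min_real: "real (max p q - min p q) = \<bar>real p - real q\<bar>"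
  by (cases "p \<le> q") (auto simp: of_nat_diff)

lemma sp_obtain: assumes "spectral_projector n A S P"
  obtains U d where "unitary_mat n U" "A = sdm n U d" "P = sdm n U (ind {i. i < n \<and> d i \<in> S})"
proof -
  obtain U d where U: "unitary_mat n U" and A: "A = U * real_diag_mat n d * mat_adjoint U"
    and P: "P = U * real_diag_mat n (\<lambda>i. if d i \<in> S then 1 else 0) * mat_adjoint U"
    using assms unfolding spectral_projector_def by blast
  have Uc: "U \<in> carrier_mat n n" using unitaryD[OF U] by simp
  have "P = sdm n U (\<lambda>i. if d i \<in> S then 1 else 0)" unfolding P sdm_def ..
  also have "\<dots> = sdm n U (ind {i. i < n \<and> d i \<in> S})"
    by (rule sdm_cong[OF Uc]) (auto simp: ind_def)
  finally show ?thesis using that U A unfolding sdm_def by blast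
qed

theorem theorem1:
  fixes dS dB :: nat and H0 V G F :: "complex mat" and E \<Delta> \<epsilon> :: real
  assumes "0 < dS" and "0 < dB"
    and "hermitian_mat (dS * dB) H0" and "hermitian_mat (dS * dB) V"
    and "0 < \<Delta>"
    and "spectral_projector (dS * dB) (H0 + V) {E..E + \<Delta>} G"
    and "spectral_projector (dS * dB) H0 {E..E + \<Delta>} F"
    and "mat_rank (dS * dB) G \<ge> 1" and "mat_rank (dS * dB) F \<ge> 1"
    and "0 < \<epsilon>" and "\<epsilon> < \<Delta> / 2"
  shows
    "let H = H0 + V;
         rG = mat_rank (dS * dB) G; rF = mat_rank (dS * dB) F;
         \<omega> = (1 / complex_of_nat rG) \<cdot>\<^sub>m G;
         \<omega>0 = (1 / complex_of_nat rF) \<cdot>\<^sub>m F;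
         \<omega>S = partial_trace_B dS dB \<omega>;
         \<omega>S0 = partial_trace_B dS dB \<omega>0;
         \<Omega>max = max rG rF; \<Omega>min = min rG rF;
         \<Delta>\<Omega> = \<Omega>max - \<Omega>min;
         B = {E..<E + \<epsilon>} \<union> {E + \<Delta> - \<epsilon><..E + \<Delta>};
         \<Omega>\<epsilon> = eig_count H B + eig_count H0 B
     in trace_norm (\<omega>S - \<omega>S0) / 2 \<le> trace_norm (\<omega> - \<omega>0) / 2 \<and>
        trace_norm (\<omega> - \<omega>0) / 2
          \<le> op_norm V / \<epsilon> + real (\<Delta>\<Omega> + \<Omega>\<epsilon>) / (2 * real \<Omega>max)"
proof -
  let ?N = "dS * dB"
  define S where "S = {E..E + \<Delta>}"
  define B where "B = {E..<E + \<epsilon>} \<union> {E + \<Delta> - \<epsilon><..E + \<Delta>}"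
  have Vc: "V \<in> carrier_mat ?N ?N" and H0c: "H0 \<in> carrier_mat ?N ?N"
    using assms(3,4) unfolding hermitian_mat_def by auto
  obtain U h where U: "unitary_mat ?N U" and HU: "H0 + V = sdm ?N U h"
    and GU: "G = sdm ?N U (ind {i. i < ?N \<and> h i \<in> S})"
    using sp_obtain[OF assms(6)[folded S_def]] by blast
  obtain W g where W: "unitary_mat ?N W" and HW: "H0 = sdm ?N W g"
    and FW: "F = sdm ?N W (ind {i. i < ?N \<and> g i \<in> S})"
    using sp_obtain[OF assms(7)[folded S_def]] by blast
  define J where "J = {i. i < ?N \<and> h i \<in> S}"
  define K where "K = {i. i < ?N \<and> g i \<in> S}"
  have Uc: "U \<in> carrier_mat ?N ?N" and Wc: "W \<in> carrier_mat ?N ?N" using U W unitaryD by auto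
  have rG: "mat_rank ?N G = card J" unfolding mat_rank_def GU J_def by (rule rank_sdm[OF U]) auto
  have rF: "mat_rank ?N F = card K" unfolding mat_rank_def FW K_def by (rule rank_sdm[OF W]) auto
  have om: "(1 / complex_of_nat (card J)) \<cdot>\<^sub>m G = sdm ?N U (\<lambda>i. ind J i / real (card J))"
  proof -
    have "(1 / complex_of_nat (card J)) = complex_of_real (1 / real (card J))" by simp
    then show ?thesis unfolding GU J_def[symmetric] by (simp only: smult_sdm[OF Uc]) simp
  qed
  have om0: "(1 / complex_of_nat (card K)) \<cdot>\<^sub>m F = sdm ?N W (\<lambda>i. ind K i / real (card K))"
  proof -
    have "(1 / complex_of_nat (card K)) = complex_of_real (1 / real (card K))" by simp
    then show ?thesis unfolding FW K_def[symmetric] by (simp only: smult_sdm[OF Wc]) simp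
  qed
  define X where "X = sdm ?N U (\<lambda>i. ind J i / real (card J)) - sdm ?N W (\<lambda>i. ind K i / real (card K))"
  have Xh: "hermitian_mat ?N X"
    unfolding hermitian_mat_def X_def
  proof
    show "sdm ?N U (\<lambda>i. ind J i / real (card J)) - sdm ?N W (\<lambda>i. ind K i / real (card K)) \<in> carrier_mat ?N ?N"
      using Wc by (simp add: minus_carrier_mat)
    show "mat_adjoint (sdm ?N U (\<lambda>i. ind J i / real (card J)) - sdm ?N W (\<lambda>i. ind K i / real (card K)))
        = sdm ?N U (\<lambda>i. ind J i / real (card J)) - sdm ?N W (\<lambda>i. ind K i / real (card K))"
      by (simp only: adj_minus[OF sdm_carrier[OF Uc] sdm_carrier[OF Wc]] adj_sdm[OF Uc] adj_sdm[OF Wc])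
  qed
  have P1: "trace_norm (partial_trace_B dS dB (sdm ?N U (\<lambda>i. ind J i / real (card J))) - partial_trace_B dS dB (sdm ?N W (\<lambda>i. ind K i / real (card K)))) / 2
      \<le> trace_norm X / 2"
  proof -
    have "partial_trace_B dS dB (sdm ?N U (\<lambda>i. ind J i / real (card J))) - partial_trace_B dS dB (sdm ?N W (\<lambda>i. ind K i / real (card K)))
        = partial_trace_B dS dB X"
      unfolding X_def by (rule pt_minus) (use Uc Wc in auto)
    then show ?thesis using part1[OF Xh] by simp
  qed
  have HV: "sdm ?N U h = sdm ?N W g + V" using HU HW by simp
  have P2: "trace_norm X / 2 \<le> op_norm V / \<epsilon> + (\<bar>real (card J) - real (card K)\<bar> + real (card {i. i < ?N \<and> h i \<in> B}) + real (card {i. i < ?N \<and> g i \<in> B}))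
          / (2 * max (real (card J)) (real (card K)))"
    unfolding X_def
    by (rule part2[OF U W Vc HV assms(10,11) J_def[unfolded S_def] K_def[unfolded S_def] _ _ B_def])
       (use assms(8,9) rG rF in auto)
  have ecH: "eig_count (H0 + V) B = card {i. i < ?N \<and> h i \<in> B}" unfolding HU by (rule eig_count_sdm[OF U])
  have ecH0: "eig_count H0 B = card {i. i < ?N \<and> g i \<in> B}" unfolding HW by (rule eig_count_sdm[OF W])
  have rr: "real (max (card J) (card K) - min (card J) (card K) + (card {i. i < ?N \<and> h i \<in> B} + card {i. i < ?N \<and> g i \<in> B}))
      = \<bar>real (card J) - real (card K)\<bar> + real (card {i. i < ?N \<and> h i \<in> B}) + real (card {i. i < ?N \<and> g i \<in> B})"
    using max_min_real[of "card J" "card K"] by simp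
  have rm: "real (max (card J) (card K)) = max (real (card J)) (real (card K))" by simp
  show ?thesis
    unfolding Let_def rG rF om om0 B_def[symmetric] ecH ecH0 rr rm X_def[symmetric]
    using P1 P2 by simp
qed


end
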